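(* Let $\mathbf{A}\in\mathbb{R}^{m\times n}$ and run Algorithm 2 (described in the context) on $\mathbf{A}$. Consider any iteration of its loop at whose start the current shift $\alpha$ is positive, and let $\mathbf{Q}\in\mathbb{R}^{m\times l}$ (with orthonormal columns) and $\alpha>0$ be the current quantities at the start of that iteration, i.e. just before the SVD of $\mathbf{A}\mathbf{A}^{\mathrm{T}}\mathbf{Q}-\alpha\mathbf{Q}$ is computed. Then for every $i\le l$, $$\sigma_i(\mathbf{Q}^{\mathrm{T}}\mathbf{A})\le\sqrt{\sigma_i(\mathbf{A}\mathbf{A}^{\mathrm{T}}\mathbf{Q}-\alpha\mathbf{Q})+\alpha}\le\sigma_i(\mathbf{A}).$$
   Context: $\sigma_i(\cdot)$ denotes the $i$-th largest singular value. Algorithm 2 (exact arithmetic), with input $\mathbf{A}\in\mathbb{R}^{m\times n}$ and integers $k,s,p$: set $l=k+s$, let $\mathbf{\Omega}\in\mathbb{R}^{n\times l}$ have i.i.d. standard Gaussian entries, set $\mathbf{Q}=\mathrm{orth}(\mathbf{A}\mathbf{\Omega})$ (an $m\times l$ matrix with orthonormal columns spanning the column space of $\mathbf{A}\mathbf{\Omega}$) and $\alpha=0$; then for $j=1,\dots,p$: compute the economic SVD $\mathbf{A}\mathbf{A}^{\mathrm{T}}\mathbf{Q}-\alpha\mathbf{Q}=\mathbf{Q}'\hat{\mathbf{S}}\mathbf{W}^{\mathrm{T}}$ (singular values in decreasing order on the diagonal of $\hat{\mathbf{S}}$), replace $\mathbf{Q}$ by $\mathbf{Q}'$, and if $\hat{\mathbf{S}}(l,l)>\alpha$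 replace $\alpha$ by $(\hat{\mathbf{S}}(l,l)+\alpha)/2$. *)

theory Defs
  imports "Jordan_Normal_Form.Matrix" "Jordan_Normal_Form.Char_Poly"
          "HOL-Computational_Algebra.Polynomial" "HOL-Library.Multiset"
begin

definition sing_vals :: "real mat \<Rightarrow> real list" where
  "sing_vals M = rev (sorted_list_of_multiset
      (image_mset sqrt (proots (char_poly (transpose_mat M * M)))))"

text \<open>sigma M i is the i-th largest singular value (1-based); 0 beyond the list.\<close>
definition sigma :: "real mat \<Rightarrow> nat \<Rightarrow> real" where
  "sigma M i = (if 1 \<le> i \<and> i \<le> length (sing_vals M) then sing_vals M ! (i - 1) else 0)"

definition col_space :: "real mat \<Rightarrow> real vec set" where
  "col_space M = {mult_mat_vec M x | x. x \<in> carrier_vec (dim_col M)}"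

definition orthonormal_cols :: "real mat \<Rightarrow> nat \<Rightarrow> nat \<Rightarrow> bool" where
  "orthonormal_cols Q m l \<longleftrightarrow> Q \<in> carrier_mat m l \<and> transpose_mat Q * Q = 1\<^sub>m l"

definition econ_svd :: "real mat \<Rightarrow> real mat \<Rightarrow> real mat \<Rightarrow> real mat \<Rightarrow> nat \<Rightarrow> nat \<Rightarrow> bool" where
  "econ_svd B Q' S W m l \<longleftrightarrow>
     orthonormal_cols Q' m l \<and> orthonormal_cols W l l \<and>
     S \<in> carrier_mat l l \<and> diagonal_mat S \<and>
     (\<forall>i<l. 0 \<le> S $$ (i, i)) \<and>
     (\<forall>i j. i \<le> j \<longrightarrow> j < l \<longrightarrow> S $$ (j, j) \<le> S $$ (i, i)) \<and>
     B = Q' * S * transpose_mat W"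

definition alg2_step :: "real mat \<Rightarrow> nat \<Rightarrow> nat \<Rightarrow> real mat \<Rightarrow> real \<Rightarrow> real mat \<Rightarrow> real \<Rightarrow> bool" where
  "alg2_step A m l Q \<alpha> Q' \<alpha>' \<longleftrightarrow>
     (\<exists>S W. econ_svd (A * transpose_mat A * Q - \<alpha> \<cdot>\<^sub>m Q) Q' S W m l \<and>
       \<alpha>' = (if S $$ (l - 1, l - 1) > \<alpha> then (S $$ (l - 1, l - 1) + \<alpha>) / 2 else \<alpha>))"

end

theory Submission
  imports Defs "Jordan_Normal_Form.Schur_Decomposition" "HOL-Computational_Algebra.Fundamental_Theorem_Algebra"
begin
lemma sprod_self_nonneg: "(v::real vec) \<bullet> v \<ge> 0"
  unfolding scalar_prod_def by (intro sum_nonneg) auto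

lemma sprod_self_pos: assumes "(v::real vec) \<in> carrier_vec n" "v \<noteq> 0\<^sub>v n" shows "v \<bullet> v > 0"
proof -
  from assms obtain k where k: "k < n" "v $ k \<noteq> 0"
    by (metis carrier_vecD eq_vecI index_zero_vec(1,2))
  have "v $ k * v $ k \<le> (\<Sum>i\<in>{0..<n}. v $ i * v $ i)" by (rule member_le_sum) (use k in auto)
  moreover have "v $ k * v $ k > 0" using k not_real_square_gt_zero by blast
  ultimately show ?thesis using assms unfolding scalar_prod_def by auto
qed

lemma sym_real_eigenvalue:
  fixes M :: "real mat"
  assumes M: "M \<in> carrier_mat n n" and n: "0 < n" and sym: "transpose_mat M = M"
  shows "\<exists>a. eigenvalue M a"
proof -
  let ?Mc = "map_mat complex_of_real M"
  have Mc: "?Mc \<in> carrier_mat n n" using M by auto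
  have "degree (char_poly ?Mc) = n" using degree_monic_char_poly[OF Mc] by auto
  then have "\<not> constant (poly (char_poly ?Mc))" using n by (simp add: constant_degree)
  then obtain z where "poly (char_poly ?Mc) z = 0" using fundamental_theorem_of_algebra by blast
  then have "eigenvalue ?Mc z" using eigenvalue_root_char_poly[OF Mc] by simp
  then obtain v where v: "v \<in> carrier_vec n" "v \<noteq> 0\<^sub>v n" "?Mc *\<^sub>v v = z \<cdot>\<^sub>v v"
    unfolding eigenvalue_def eigenvector_def using Mc by auto
  define x where "x = map_vec Re v"
  define y where "y = map_vec Im v"
  have x: "x \<in> carrier_vec n" and y: "y \<in> carrier_vec n" using v by (auto simp: x_def y_def)
  have comp: "(\<Sum>k=0..<n. complex_of_real (M $$ (i,k)) * v $ k) = z * v $ i" if i: "i < n" for i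
  proof -
    have "(?Mc *\<^sub>v v) $ i = (z \<cdot>\<^sub>v v) $ i" using v(3) by simp
    then show ?thesis using i M v by (simp add: mult_mat_vec_def scalar_prod_def)
  qed
  have Mx: "M *\<^sub>v x = Re z \<cdot>\<^sub>v x - Im z \<cdot>\<^sub>v y"
  proof (rule eq_vecI)
    fix i assume "i < dim_vec (Re z \<cdot>\<^sub>v x - Im z \<cdot>\<^sub>v y)"
    then have i: "i < n" using y by simp
    have "Re (\<Sum>k=0..<n. complex_of_real (M $$ (i,k)) * v $ k) = Re (z * v $ i)" using comp[OF i] by simp
    then show "(M *\<^sub>v x) $ i = (Re z \<cdot>\<^sub>v x - Im z \<cdot>\<^sub>v y) $ i"
      using i M v x y by (simp add: mult_mat_vec_def scalar_prod_def Re_sum x_def y_def)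
  qed (use M x y in auto)
  have My: "M *\<^sub>v y = Im z \<cdot>\<^sub>v x + Re z \<cdot>\<^sub>v y"
  proof (rule eq_vecI)
    fix i assume "i < dim_vec (Im z \<cdot>\<^sub>v x + Re z \<cdot>\<^sub>v y)"
    then have i: "i < n" using y by simp
    have "Im (\<Sum>k=0..<n. complex_of_real (M $$ (i,k)) * v $ k) = Im (z * v $ i)" using comp[OF i] by simp
    then show "(M *\<^sub>v y) $ i = (Im z \<cdot>\<^sub>v x + Re z \<cdot>\<^sub>v y) $ i"
      using i M v x y by (simp add: mult_mat_vec_def scalar_prod_def Im_sum x_def y_def algebra_simps)
  qed (use M x y in auto)
  have "(transpose_mat M *\<^sub>v y) \<bullet> x = y \<bullet> (M *\<^sub>v x)"
    by (rule transpose_vec_mult_scalar[OF M x y])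
  then have symm: "x \<bullet> (M *\<^sub>v y) = y \<bullet> (M *\<^sub>v x)"
    using sym comm_scalar_prod[OF x, of "M *\<^sub>v y"] M y by auto
  have "y \<bullet> (M *\<^sub>v x) = Re z * (y \<bullet> x) - Im z * (y \<bullet> y)"
    unfolding Mx using x y by (simp add: scalar_prod_minus_distrib)
  moreover have "x \<bullet> (M *\<^sub>v y) = Im z * (x \<bullet> x) + Re z * (x \<bullet> y)"
    unfolding My using x y by (simp add: scalar_prod_add_distrib)
  moreover have "x \<bullet> y = y \<bullet> x" using comm_scalar_prod[OF x y] .
  ultimately have "Im z * (x \<bullet> x + y \<bullet> y) = 0" using symm by (simp add: algebra_simps)
  moreover have "x \<noteq> 0\<^sub>v n \<or> y \<noteq> 0\<^sub>v n"
  proof (rule ccontr)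
    assume "\<not> ?thesis"
    then have xy0: "x = 0\<^sub>v n" "y = 0\<^sub>v n" by auto
    have "v = 0\<^sub>v n"
    proof (rule eq_vecI)
      fix i assume "i < dim_vec (0\<^sub>v n :: complex vec)"
      then have i: "i < n" by simp
      have "x $ i = 0" "y $ i = 0" using xy0 i by auto
      then show "v $ i = 0\<^sub>v n $ i" using i v(1) by (simp add: x_def y_def complex_eq_iff)
    qed (use v(1) in auto)
    with v(2) show False by simp
  qed
  ultimately have "x \<bullet> x + y \<bullet> y > 0"
    using sprod_self_pos[OF x] sprod_self_pos[OF y] sprod_self_nonneg[of x] sprod_self_nonneg[of y] by fastforce
  then have z0: "Im z = 0" using \<open>Im z * _ = 0\<close> by simp
  show ?thesis
  proof (cases "x = 0\<^sub>v n")
    case False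
    then have "eigenvector M x (Re z)" unfolding eigenvector_def using M x y Mx z0 by (auto intro!: eq_vecI)
    then show ?thesis unfolding eigenvalue_def by blast
  next
    case True
    with \<open>x \<noteq> 0\<^sub>v n \<or> y \<noteq> 0\<^sub>v n\<close> have "y \<noteq> 0\<^sub>v n" by simp
    then have "eigenvector M y (Re z)" unfolding eigenvector_def using M y My z0 x by auto
    then show ?thesis unfolding eigenvalue_def by blast
  qed
qed
definition orthonormal_sys :: "nat \<Rightarrow> (nat \<Rightarrow> real vec) \<Rightarrow> bool" where
  "orthonormal_sys n u \<longleftrightarrow> (\<forall>j<n. u j \<in> carrier_vec n) \<and>
     (\<forall>i<n. \<forall>j<n. u i \<bullet> u j = (if i = j then 1 else 0))"

definition eig_sys :: "real mat \<Rightarrow> nat \<Rightarrow> (nat \<Rightarrow> real vec) \<Rightarrow> (nat \<Rightarrow> real) \<Rightarrow> bool" where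
  "eig_sys M n u d \<longleftrightarrow> orthonormal_sys n u \<and> (\<forall>j<n. M *\<^sub>v u j = d j \<cdot>\<^sub>v u j) \<and>
     (\<forall>i j. i \<le> j \<longrightarrow> j < n \<longrightarrow> d j \<le> d i)"

lemma conjugate_real_vec[simp]: "conjugate (v :: real vec) = v"
  by (intro eq_vecI) auto

lemma orthonormal_completion:
  assumes u: "u \<in> carrier_vec n" "u \<bullet> u = (1::real)"
  shows "\<exists>w. orthonormal_sys n w \<and> w 0 = u"
proof -
  interpret cof_vec_space n "TYPE(real)" .
  have u0: "u \<noteq> 0\<^sub>v n" using u by auto
  have n: "n > 0"
  proof (rule ccontr)
    assume "\<not> n > 0" then have "n = 0" by simp
    then have "u = 0\<^sub>v n" using u(1) by (intro eq_vecI) auto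
    with u0 show False by simp
  qed
  define b where "b = basis_completion u"
  from basis_completion[OF u(1) u0, folded b_def]
  have b: "set b \<subseteq> carrier_vec n" "distinct b" "\<not> lin_dep (set b)" "length b = n" "hd b = u" by auto
  define ws where "ws = gram_schmidt n b"
  from gram_schmidt_result[OF b(1) b(2) b(3) ws_def]
  have ws: "corthogonal ws" "set ws \<subseteq> carrier_vec n" "length ws = n" using b(4) by auto
  obtain vs where bv: "b = u # vs" using b(4) b(5) n by (cases b) auto
  have "hd ws = u" using gram_schmidt_hd[OF u(1), of vs] bv ws_def by simp
  then have hd: "ws ! 0 = u" using ws(3) n by (cases ws) auto
  have wsc: "ws ! j \<in> carrier_vec n" if "j < n" for j using ws that by auto
  have orth: "ws ! i \<bullet> ws ! j = 0 \<longleftrightarrow> i \<noteq> j" if "i < n" "j < n" for i j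
    using corthogonalD[OF ws(1), of i j] that ws(3) by simp
  define w where "w j = (1 / sqrt (ws ! j \<bullet> ws ! j)) \<cdot>\<^sub>v ws ! j" for j
  have "orthonormal_sys n w"
    unfolding orthonormal_sys_def
  proof (intro conjI allI impI)
    fix j assume "j < n" then show "w j \<in> carrier_vec n" using wsc unfolding w_def by auto
  next
    fix i j assume i: "i < n" and j: "j < n"
    have "w i \<bullet> w j = (1 / sqrt (ws ! i \<bullet> ws ! i)) * (1 / sqrt (ws ! j \<bullet> ws ! j)) * (ws ! i \<bullet> ws ! j)"
      unfolding w_def using wsc[OF i] wsc[OF j] by simp
    moreover have "ws ! i \<bullet> ws ! i > 0"
      using orth[OF i i] sprod_self_nonneg[of "ws ! i"] by linarith
    ultimately show "w i \<bullet> w j = (if i = j then 1 else 0)"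
      using orth[OF i j] by (auto simp: field_simps)
  qed
  moreover have "w 0 = u" unfolding w_def hd using u by simp
  ultimately show ?thesis by blast
qed

lemma sum_shift0: "(\<Sum>k\<in>{0..<Suc n}. f k) = f 0 + (\<Sum>k\<in>{0..<n}. f (Suc k))"
  using sum.atLeast0_lessThan_Suc_shift[of f n] by (simp only: comp_def)

lemma spectral_aux:
  "\<forall>M. M \<in> carrier_mat n n \<longrightarrow> transpose_mat M = M \<longrightarrow> (\<exists>u d. eig_sys M n u d)"
proof (induction n)
  case 0 show ?case by (auto simp: eig_sys_def orthonormal_sys_def)
next
  case (Suc n)
  show ?case
  proof (intro allI impI)
    fix M :: "real mat" assume M: "M \<in> carrier_mat (Suc n) (Suc n)" and sym: "transpose_mat M = M"
    define N where "N = Suc n"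
    have MN: "M \<in> carrier_mat N N" using M N_def by simp
    have "coeff (char_poly M) N = 1" using degree_monic_char_poly[OF MN] by simp
    then have cpnz: "char_poly M \<noteq> 0" by auto
    define R where "R = {a. poly (char_poly M) a = 0}"
    have finR: "finite R" using poly_roots_finite[OF cpnz] R_def by simp
    have evR: "eigenvalue M a \<longleftrightarrow> a \<in> R" for a
      using eigenvalue_root_char_poly[OF MN] R_def by simp
    obtain a0 where "eigenvalue M a0" using sym_real_eigenvalue[OF MN _ sym] N_def by auto
    then have "R \<noteq> {}" using evR by auto
    define lam where "lam = Max R"
    have "lam \<in> R" using finR \<open>R \<noteq> {}\<close> lam_def by simp
    then have "eigenvalue M lam" using evR by simp
    have maxR: "a \<le> lam" if "eigenvalue M a" for a using evR that finR lam_def by simp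
    obtain v where v: "v \<in> carrier_vec N" "v \<noteq> 0\<^sub>v N" "M *\<^sub>v v = lam \<cdot>\<^sub>v v"
      using \<open>eigenvalue M lam\<close> MN unfolding eigenvalue_def eigenvector_def by auto
    define u0 where "u0 = (1 / sqrt (v \<bullet> v)) \<cdot>\<^sub>v v"
    have vpos: "v \<bullet> v > 0" using sprod_self_pos[OF v(1,2)] .
    have u0: "u0 \<in> carrier_vec N" using v unfolding u0_def by simp
    have u0u0: "u0 \<bullet> u0 = 1" using v vpos unfolding u0_def by (simp add: field_simps)
    have Mu0: "M *\<^sub>v u0 = lam \<cdot>\<^sub>v u0" unfolding u0_def using v MN
      by (simp add: mult_mat_vec smult_smult_assoc mult.commute)
    obtain w where w: "orthonormal_sys N w" "w 0 = u0" using orthonormal_completion[OF u0 u0u0] by blast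
    have wc: "w j \<in> carrier_vec N" if "j < N" for j using w(1) that unfolding orthonormal_sys_def by auto
    have ww: "w i \<bullet> w j = (if i = j then 1 else 0)" if "i < N" "j < N" for i j
      using w(1) that unfolding orthonormal_sys_def by auto
    define W where "W = mat N N (\<lambda>(i,j). w j $ i)"
    have W: "W \<in> carrier_mat N N" unfolding W_def by simp
    have colW: "col W j = w j" if "j < N" for j
      unfolding W_def using that wc[OF that] by (auto simp: col_mat intro!: eq_vecI)
    have WtW: "transpose_mat W * W = 1\<^sub>m N"
      by (rule eq_matI) (use W in \<open>auto simp: row_transpose colW ww\<close>)
    have WWt: "W * transpose_mat W = 1\<^sub>m N"
      using mat_mult_left_right_inverse[OF _ W WtW] W by auto
    have iso: "(W *\<^sub>v p) \<bullet> (W *\<^sub>v q) = p \<bullet> q" if p: "p \<in> carrier_vec N" and q: "q \<in> carrier_vec N" for p q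
    proof -
      have "(transpose_mat W *\<^sub>v (W *\<^sub>v p)) \<bullet> q = (W *\<^sub>v p) \<bullet> (W *\<^sub>v q)"
        by (rule transpose_vec_mult_scalar[OF W q]) (use W p in auto)
      moreover have "transpose_mat W *\<^sub>v (W *\<^sub>v p) = p"
        using assoc_mult_mat_vec[of "transpose_mat W" N N W N p, symmetric] W p WtW by simp
      ultimately show ?thesis by simp
    qed
    have Wtw0: "transpose_mat W *\<^sub>v u0 = unit_vec N 0"
      by (rule eq_vecI) (use W u0 wc ww w(2) colW in \<open>auto simp: row_transpose\<close>)
    have u0W: "u0 \<bullet> (W *\<^sub>v p) = p $ 0" if p: "p \<in> carrier_vec N" for p
    proof -
      have "(transpose_mat W *\<^sub>v u0) \<bullet> p = u0 \<bullet> (W *\<^sub>v p)"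
        by (rule transpose_vec_mult_scalar[OF W p u0])
      then show ?thesis using Wtw0 scalar_prod_left_unit[OF p, of 0] N_def by simp
    qed
    define A' where "A' = transpose_mat W * M * W"
    have A': "A' \<in> carrier_mat N N" unfolding A'_def using W MN by auto
    have A'ij: "A' $$ (i,j) = w i \<bullet> (M *\<^sub>v w j)" if "i < N" "j < N" for i j
    proof -
      have "A' = transpose_mat W * (M * W)" unfolding A'_def using W MN by (simp add: assoc_mult_mat)
      then have "A' $$ (i,j) = row (transpose_mat W) i \<bullet> col (M * W) j" using that W MN by simp
      also have "col (M * W) j = M *\<^sub>v w j" using that W MN colW by (simp add: col_mult2 mult_mat_vec_def)
      finally show ?thesis using that W by (simp add: row_transpose colW)
    qed
    have A'sym: "A' $$ (i,j) = A' $$ (j,i)" if "i < N" "j < N" for i j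
    proof -
      have "(transpose_mat M *\<^sub>v w i) \<bullet> w j = w i \<bullet> (M *\<^sub>v w j)"
        by (rule transpose_vec_mult_scalar[OF MN wc wc]) (use that in auto)
      then show ?thesis using A'ij that sym comm_scalar_prod[of "M *\<^sub>v w i" N "w j"] MN wc by auto
    qed
    have A'0: "A' $$ (i,0) = (if i = 0 then lam else 0)" if "i < N" for i
      using A'ij[OF that, of 0] N_def w(2) Mu0 ww[OF that, of 0] wc[OF that] u0 by simp
    define M3 where "M3 = mat n n (\<lambda>(i,j). A' $$ (Suc i, Suc j))"
    have M3: "M3 \<in> carrier_mat n n" unfolding M3_def by simp
    have M3sym: "transpose_mat M3 = M3"
      by (rule eq_matI) (use A'sym N_def in \<open>auto simp: M3_def\<close>)
    obtain u' d' where ud': "eig_sys M3 n u' d'" using Suc.IH M3 M3sym by blast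
    have u'c: "u' j \<in> carrier_vec n" if "j < n" for j using ud' that unfolding eig_sys_def orthonormal_sys_def by auto
    have u'u': "u' i \<bullet> u' j = (if i = j then 1 else 0)" if "i < n" "j < n" for i j
      using ud' that unfolding eig_sys_def orthonormal_sys_def by auto
    have M3u': "M3 *\<^sub>v u' j = d' j \<cdot>\<^sub>v u' j" if "j < n" for j using ud' that unfolding eig_sys_def by auto
    have d'sort: "d' j \<le> d' i" if "i \<le> j" "j < n" for i j using ud' that unfolding eig_sys_def by auto
    define lift where "lift z = vec N (\<lambda>i. if i = 0 then 0 else z $ (i - 1))" for z :: "real vec"
    have liftc: "lift z \<in> carrier_vec N" for z unfolding lift_def by simp
    have dimlift[simp]: "dim_vec (lift z) = N" for z unfolding lift_def by simp
    have lift0: "lift z $ 0 = 0" for z unfolding lift_def N_def by simp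
    have liftS: "lift z $ Suc i = z $ i" if "i < n" for z i unfolding lift_def N_def using that by simp
    have liftdot: "lift z \<bullet> lift z' = z \<bullet> z'" if "z \<in> carrier_vec n" "z' \<in> carrier_vec n" for z z'
    proof -
      have "lift z \<bullet> lift z' = (\<Sum>k\<in>{0..<N}. lift z $ k * lift z' $ k)" unfolding scalar_prod_def lift_def by simp
      also have "\<dots> = (\<Sum>k\<in>{0..<n}. z $ k * z' $ k)" unfolding N_def sum_shift0 using lift0 liftS by simp
      finally show ?thesis using that unfolding scalar_prod_def by simp
    qed
    have liftsmult: "lift (c \<cdot>\<^sub>v z) = c \<cdot>\<^sub>v lift z" if "z \<in> carrier_vec n" for c z
      using that unfolding lift_def by (intro eq_vecI) (auto simp: N_def)
    have liftA: "A' *\<^sub>v lift z = lift (M3 *\<^sub>v z)" if z: "z \<in> carrier_vec n" for z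
    proof (rule eq_vecI)
      fix i assume "i < dim_vec (lift (M3 *\<^sub>v z))"
      then have i: "i < N" using liftc carrier_vecD by metis
      have "(A' *\<^sub>v lift z) $ i = (\<Sum>k\<in>{0..<N}. A' $$ (i,k) * lift z $ k)"
        using i A' liftc by (simp add: mult_mat_vec_def scalar_prod_def row_def carrier_vecD)
      also have "\<dots> = (\<Sum>k\<in>{0..<n}. A' $$ (i,Suc k) * z $ k)"
        unfolding N_def sum_shift0 using lift0 liftS by simp
      also have "\<dots> = lift (M3 *\<^sub>v z) $ i"
      proof (cases i)
        case 0
        have "A' $$ (0, Suc k) = 0" if "k < n" for k
          using A'sym[of 0 "Suc k"] A'0[of "Suc k"] that N_def by simp
        then show ?thesis using 0 lift0 by simp
      next
        case (Suc i')
        then have i': "i' < n" using i N_def by simp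
        show ?thesis using Suc liftS[OF i'] i' M3 z
          by (simp add: M3_def mult_mat_vec_def scalar_prod_def row_def carrier_vecD)
      qed
      finally show "(A' *\<^sub>v lift z) $ i = lift (M3 *\<^sub>v z) $ i" .
    qed (use A' in simp)
    have WA': "W * A' = M * W"
    proof -
      have "W * A' = (W * transpose_mat W) * M * W" unfolding A'_def using W MN
        by (simp add: assoc_mult_mat[of _ N N _ N _ N])
      then show ?thesis using WWt MN W by simp
    qed
    have MW: "M *\<^sub>v (W *\<^sub>v p) = W *\<^sub>v (A' *\<^sub>v p)" if "p \<in> carrier_vec N" for p
      using assoc_mult_mat_vec[of M N N W N p] assoc_mult_mat_vec[of W N N A' N p] WA' MN W A' that by simp
    define u where "u j = (if j = 0 then u0 else W *\<^sub>v lift (u' (j - 1)))" for j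
    define d where "d j = (if j = 0 then lam else d' (j - 1))" for j
    have uc: "u j \<in> carrier_vec N" if "j < N" for j using u0 W liftc unfolding u_def by auto
    have uu: "u i \<bullet> u j = (if i = j then 1 else 0)" if i: "i < N" and j: "j < N" for i j
    proof (cases i)
      case 0
      show ?thesis
      proof (cases j)
        case 0 then show ?thesis using \<open>i = 0\<close> u0u0 u_def by simp
      next
        case (Suc j') then show ?thesis using \<open>i = 0\<close> u0W[OF liftc] lift0 u_def by simp
      qed
    next
      case (Suc i')
      show ?thesis
      proof (cases j)
        case 0 then show ?thesis using Suc u0W[OF liftc] lift0 u_def comm_scalar_prod[OF u0, of "W *\<^sub>v lift (u' i')"] W liftc
          by simp
      next
        case (Suc j') then show ?thesis using \<open>i = Suc i'\<close> i j iso[OF liftc liftc] liftdot u'c u'u' u_def N_def by simp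
      qed
    qed
    have Mu: "M *\<^sub>v u j = d j \<cdot>\<^sub>v u j" if j: "j < N" for j
    proof (cases j)
      case 0 then show ?thesis using Mu0 u_def d_def by simp
    next
      case (Suc j')
      then have j': "j' < n" using j N_def by simp
      have "M *\<^sub>v u j = W *\<^sub>v (A' *\<^sub>v lift (u' j'))" using MW[OF liftc] Suc u_def by simp
      also have "\<dots> = W *\<^sub>v (d' j' \<cdot>\<^sub>v lift (u' j'))" using liftA[OF u'c[OF j']] M3u'[OF j'] liftsmult[OF u'c[OF j']] by simp
      also have "\<dots> = d j \<cdot>\<^sub>v u j" using mult_mat_vec[OF W liftc] Suc u_def d_def by simp
      finally show ?thesis .
    qed
    have dsort: "d j \<le> d i" if "i \<le> j" "j < N" for i j
    proof -
      have dle: "d j \<le> lam" if "j < N" for j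
      proof -
        have "u j \<noteq> 0\<^sub>v N" using uu[OF that that] by auto
        then have "eigenvector M (u j) (d j)" unfolding eigenvector_def using Mu[OF that] uc[OF that] MN by auto
        then show ?thesis using maxR unfolding eigenvalue_def by blast
      qed
      show ?thesis
      proof (cases i)
        case 0 then show ?thesis using dle[OF \<open>j < N\<close>] d_def by simp
      next
        case (Suc i')
        then show ?thesis using that d'sort[of i' "j - 1"] d_def N_def by auto
      qed
    qed
    have "eig_sys M N u d" unfolding eig_sys_def orthonormal_sys_def using uc uu Mu dsort by blast
    then show "\<exists>u d. eig_sys M (Suc n) u d" using N_def by blast
  qed
qed

lemma spectral:
  assumes "M \<in> carrier_mat n n" "transpose_mat M = M"
  shows "\<exists>u d. eig_sys M n u d"
  using spectral_aux assms by blast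

definition Umat :: "nat \<Rightarrow> (nat \<Rightarrow> real vec) \<Rightarrow> real mat" where
  "Umat n u = mat n n (\<lambda>(i,j). u j $ i)"

context
  fixes n :: nat and u :: "nat \<Rightarrow> real vec"
  assumes on: "orthonormal_sys n u"
begin

lemma on_carrier: "j < n \<Longrightarrow> u j \<in> carrier_vec n"
  using on unfolding orthonormal_sys_def by auto

lemma on_dot: "i < n \<Longrightarrow> j < n \<Longrightarrow> u i \<bullet> u j = (if i = j then 1 else 0)"
  using on unfolding orthonormal_sys_def by auto

lemma Umat_carrier: "Umat n u \<in> carrier_mat n n" unfolding Umat_def by simp

lemma Umat_col: assumes j: "j < n" shows "col (Umat n u) j = u j"
proof -
  have "dim_vec (u j) = n" using on_carrier[OF j] by auto
  then show ?thesis unfolding Umat_def using j by (auto simp: col_mat intro!: eq_vecI)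
qed

lemma Umat_tU: "transpose_mat (Umat n u) * Umat n u = 1\<^sub>m n"
  by (rule eq_matI) (use Umat_carrier in \<open>auto simp: row_transpose Umat_col on_dot\<close>)

lemma Umat_Ut: "Umat n u * transpose_mat (Umat n u) = 1\<^sub>m n"
  using mat_mult_left_right_inverse[OF _ Umat_carrier Umat_tU] Umat_carrier by auto

lemma Umat_t_vec: "z \<in> carrier_vec n \<Longrightarrow> transpose_mat (Umat n u) *\<^sub>v z = vec n (\<lambda>j. u j \<bullet> z)"
  by (rule eq_vecI) (use Umat_carrier in \<open>auto simp: row_transpose Umat_col\<close>)

lemma Umat_iso: assumes "p \<in> carrier_vec n" "q \<in> carrier_vec n"
  shows "(Umat n u *\<^sub>v p) \<bullet> (Umat n u *\<^sub>v q) = p \<bullet> q"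
proof -
  let ?U = "Umat n u"
  have "(transpose_mat ?U *\<^sub>v (?U *\<^sub>v p)) \<bullet> q = (?U *\<^sub>v p) \<bullet> (?U *\<^sub>v q)"
    by (rule transpose_vec_mult_scalar[OF Umat_carrier assms(2)]) (use assms Umat_carrier in auto)
  moreover have "transpose_mat ?U *\<^sub>v (?U *\<^sub>v p) = p"
    using assoc_mult_mat_vec[of "transpose_mat ?U" n n ?U n p, symmetric] Umat_carrier assms Umat_tU by simp
  ultimately show ?thesis by simp
qed

lemma Umat_expand: assumes z: "z \<in> carrier_vec n"
  shows "z = Umat n u *\<^sub>v vec n (\<lambda>j. u j \<bullet> z)"
proof -
  let ?U = "Umat n u"
  have "?U *\<^sub>v (transpose_mat ?U *\<^sub>v z) = z"
    using assoc_mult_mat_vec[of ?U n n "transpose_mat ?U" n z, symmetric] Umat_carrier z Umat_Ut by simp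
  then show ?thesis using Umat_t_vec[OF z] by simp
qed

lemma Umat_coord: assumes "p \<in> carrier_vec n" "j < n"
  shows "u j \<bullet> (Umat n u *\<^sub>v p) = p $ j"
proof -
  have "transpose_mat (Umat n u) *\<^sub>v (Umat n u *\<^sub>v p) = p"
    using assoc_mult_mat_vec[of "transpose_mat (Umat n u)" n n "Umat n u" n p, symmetric] Umat_carrier assms Umat_tU by simp
  then have "vec n (\<lambda>j. u j \<bullet> (Umat n u *\<^sub>v p)) = p" using Umat_t_vec[of "Umat n u *\<^sub>v p"] Umat_carrier assms by simp
  then show ?thesis using assms by (metis index_vec)
qed

lemma sq_expand: assumes z: "z \<in> carrier_vec n"
  shows "z \<bullet> z = (\<Sum>j\<in>{0..<n}. (u j \<bullet> z)^2)"
proof -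
  have "z \<bullet> z = vec n (\<lambda>j. u j \<bullet> z) \<bullet> vec n (\<lambda>j. u j \<bullet> z)"
    using Umat_iso[of "vec n (\<lambda>j. u j \<bullet> z)" "vec n (\<lambda>j. u j \<bullet> z)"] Umat_expand[OF z] by simp
  then show ?thesis by (simp add: scalar_prod_def power2_eq_square)
qed

end

context
  fixes S :: "real mat" and n :: nat and u :: "nat \<Rightarrow> real vec" and d :: "nat \<Rightarrow> real"
  assumes es: "eig_sys S n u d" and S: "S \<in> carrier_mat n n"
begin

lemma es_on: "orthonormal_sys n u" using es unfolding eig_sys_def by auto
lemma es_ev: "j < n \<Longrightarrow> S *\<^sub>v u j = d j \<cdot>\<^sub>v u j" using es unfolding eig_sys_def by auto
lemma es_sorted: "i \<le> j \<Longrightarrow> j < n \<Longrightarrow> d j \<le> d i" using es unfolding eig_sys_def by auto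

lemma es_SU: "S * Umat n u = Umat n u * mat n n (\<lambda>(i,j). if i = j then d i else 0)"
proof (rule eq_matI)
  fix i j assume i: "i < dim_row (Umat n u * mat n n (\<lambda>(i,j). if i = j then d i else 0))"
     and j: "j < dim_col (Umat n u * mat n n (\<lambda>(i,j). if i = j then d i else 0))"
  then have i: "i < n" and j: "j < n" using Umat_carrier[OF es_on] by auto
  have "(S * Umat n u) $$ (i,j) = (S *\<^sub>v u j) $ i"
    using i j S Umat_carrier[OF es_on] Umat_col[OF es_on j] by (simp add: mult_mat_vec_def)
  also have "\<dots> = d j * u j $ i" using es_ev[OF j] on_carrier[OF es_on j] i by simp
  also have "\<dots> = (Umat n u * mat n n (\<lambda>(i,j). if i = j then d i else 0)) $$ (i,j)"
    using i j Umat_carrier[OF es_on]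
    by (simp add: scalar_prod_def Umat_def row_def col_def if_distrib[of "\<lambda>x. _ * x"] sum.delta' cong: if_cong)
  finally show "(S * Umat n u) $$ (i,j) = (Umat n u * mat n n (\<lambda>(i,j). if i = j then d i else 0)) $$ (i,j)" .
qed (use S Umat_carrier[OF es_on] in auto)

lemma es_Sz: assumes z: "z \<in> carrier_vec n"
  shows "S *\<^sub>v z = Umat n u *\<^sub>v vec n (\<lambda>j. d j * (u j \<bullet> z))"
proof -
  let ?U = "Umat n u" and ?D = "mat n n (\<lambda>(i,j). if i = j then d i else 0)"
  let ?a = "vec n (\<lambda>j. u j \<bullet> z)"
  have U: "?U \<in> carrier_mat n n" using Umat_carrier[OF es_on] .
  have "S *\<^sub>v z = S *\<^sub>v (?U *\<^sub>v ?a)" using Umat_expand[OF es_on z] by simp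
  also have "\<dots> = (S * ?U) *\<^sub>v ?a" using S U by simp
  also have "\<dots> = ?U *\<^sub>v (?D *\<^sub>v ?a)" unfolding es_SU by (rule assoc_mult_mat_vec[OF U, of _ n]) auto
  also have "?D *\<^sub>v ?a = vec n (\<lambda>j. d j * (u j \<bullet> z))"
    by (rule eq_vecI) (auto simp: scalar_prod_def row_def if_distrib[of "\<lambda>x. x * _"] sum.delta cong: if_cong)
  finally show ?thesis .
qed

lemma es_quad: assumes z: "z \<in> carrier_vec n"
  shows "z \<bullet> (S *\<^sub>v z) = (\<Sum>j\<in>{0..<n}. d j * (u j \<bullet> z)^2)"
proof -
  have "z \<bullet> (S *\<^sub>v z) = vec n (\<lambda>j. u j \<bullet> z) \<bullet> vec n (\<lambda>j. d j * (u j \<bullet> z))"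
    using Umat_iso[OF es_on, of "vec n (\<lambda>j. u j \<bullet> z)" "vec n (\<lambda>j. d j * (u j \<bullet> z))"]
      Umat_expand[OF es_on z] es_Sz[OF z] by simp
  then show ?thesis by (simp add: scalar_prod_def power2_eq_square algebra_simps)
qed

lemma es_sq: assumes z: "z \<in> carrier_vec n"
  shows "(S *\<^sub>v z) \<bullet> (S *\<^sub>v z) = (\<Sum>j\<in>{0..<n}. (d j)^2 * (u j \<bullet> z)^2)"
proof -
  have "(S *\<^sub>v z) \<bullet> (S *\<^sub>v z) = vec n (\<lambda>j. d j * (u j \<bullet> z)) \<bullet> vec n (\<lambda>j. d j * (u j \<bullet> z))"
    using Umat_iso[OF es_on, of "vec n (\<lambda>j. d j * (u j \<bullet> z))" "vec n (\<lambda>j. d j * (u j \<bullet> z))"]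
      es_Sz[OF z] by simp
  then show ?thesis by (simp add: scalar_prod_def power2_eq_square algebra_simps)
qed

lemma es_shift_sq: assumes z: "z \<in> carrier_vec n"
  shows "(S *\<^sub>v z - c \<cdot>\<^sub>v z) \<bullet> (S *\<^sub>v z - c \<cdot>\<^sub>v z) = (\<Sum>j\<in>{0..<n}. (d j - c)^2 * (u j \<bullet> z)^2)"
proof -
  have e: "(S *\<^sub>v z - c \<cdot>\<^sub>v z) \<bullet> (S *\<^sub>v z - c \<cdot>\<^sub>v z) = (S *\<^sub>v z) \<bullet> (S *\<^sub>v z) - 2 * c * (z \<bullet> (S *\<^sub>v z)) + c^2 * (z \<bullet> z)"
    using z S by (simp add: scalar_prod_def power2_eq_square algebra_simps sum.distrib sum_distrib_left sum_subtractf)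
  show ?thesis unfolding e es_sq[OF z] es_quad[OF z] sq_expand[OF es_on z]
    by (simp add: power2_eq_square algebra_simps sum.distrib sum_distrib_left sum_subtractf)
qed

lemma es_char_poly: "char_poly S = (\<Prod>a \<leftarrow> map d [0..<n]. [:- a, 1:])"
proof -
  let ?U = "Umat n u" and ?D = "mat n n (\<lambda>(i,j). if i = j then d i else 0)"
  have U: "?U \<in> carrier_mat n n" using Umat_carrier[OF es_on] .
  have D: "?D \<in> carrier_mat n n" by simp
  have "S = S * (?U * transpose_mat ?U)" using Umat_Ut[OF es_on] S by simp
  also have "\<dots> = (S * ?U) * transpose_mat ?U" using S U by (simp add: assoc_mult_mat[of _ n n _ n _ n])
  also have "\<dots> = ?U * ?D * transpose_mat ?U" unfolding es_SU ..
  finally have SUD: "S = ?U * ?D * transpose_mat ?U" .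
  have "similar_mat_wit S ?D ?U (transpose_mat ?U)"
  proof -
    have dr: "dim_row S = n" using S by simp
    have c: "{S, ?D, ?U, transpose_mat ?U} \<subseteq> carrier_mat n n" using S U D by auto
    show ?thesis unfolding similar_mat_wit_def Let_def dr
      using c SUD Umat_Ut[OF es_on] Umat_tU[OF es_on] by blast
  qed
  then have "similar_mat S ?D" unfolding similar_mat_def by blast
  then have "char_poly S = char_poly ?D" by (rule char_poly_similar)
  also have "\<dots> = (\<Prod>a \<leftarrow> diag_mat ?D. [:- a, 1:])"
    by (rule char_poly_upper_triangular[OF D]) (auto simp: upper_triangular_def)
  also have "diag_mat ?D = map d [0..<n]" unfolding diag_mat_def by simp
  finally show ?thesis .
qed

end

lemma proots_linear_prod: "proots (\<Prod>a \<leftarrow> as. [:- a, 1:]) = mset (as :: real list)"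
proof (induction as)
  case Nil then show ?case by simp
next
  case (Cons a as)
  have nz: "(\<Prod>a \<leftarrow> as. [:- a, 1:]) \<noteq> (0 :: real poly)"
    unfolding prod_list_zero_iff by auto
  have "(\<Prod>a \<leftarrow> a # as. [:- a, 1:]) = [:- a, 1:] * (\<Prod>a \<leftarrow> as. [:- a, 1:])" by (simp only: list.map prod_list.Cons)
  also have "proots \<dots> = proots [:- a, 1:] + proots (\<Prod>a \<leftarrow> as. [:- a, 1:])"
    by (rule proots_mult) (use nz in auto)
  finally have "proots (\<Prod>a \<leftarrow> a # as. [:- a, 1:]) = proots [:- a, 1:] + proots (\<Prod>a \<leftarrow> as. [:- a, 1:])" .
  also have "proots [:- a, 1:] = {#a#}" using proots_linear_factor[of "-a"] by simp
  finally show ?case using Cons by simp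
qed

lemma gram_spec:
  fixes X :: "real mat"
  assumes X: "X \<in> carrier_mat r c"
  shows "\<exists>u d. eig_sys (transpose_mat X * X) c u d \<and> (\<forall>j<c. 0 \<le> d j) \<and>
           (\<forall>i. sigma X i = (if 1 \<le> i \<and> i \<le> c then sqrt (d (i - 1)) else 0))"
proof -
  let ?G = "transpose_mat X * X"
  have G: "?G \<in> carrier_mat c c" using X by auto
  have Gsym: "transpose_mat ?G = ?G" using X by (simp add: transpose_mult[of _ c r _ c])
  obtain u d where es: "eig_sys ?G c u d" using spectral[OF G Gsym] by blast
  have on: "orthonormal_sys c u" using es_on[OF es G] .
  have dnn: "0 \<le> d j" if j: "j < c" for j
  proof -
    have uj: "u j \<in> carrier_vec c" using on_carrier[OF on j] .
    have "u j \<bullet> (d j \<cdot>\<^sub>v u j) = d j * (u j \<bullet> u j)" using uj by simp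
    then have "d j = u j \<bullet> (d j \<cdot>\<^sub>v u j)" using on_dot[OF on j j] by simp
    also have "\<dots> = u j \<bullet> (?G *\<^sub>v u j)" by (simp only: es_ev[OF es G j])
    also have "?G *\<^sub>v u j = transpose_mat X *\<^sub>v (X *\<^sub>v u j)"
      by (rule assoc_mult_mat_vec[of _ c r X c]) (use X uj in auto)
    also have "u j \<bullet> \<dots> = (transpose_mat X *\<^sub>v (X *\<^sub>v u j)) \<bullet> u j"
    proof -
      have "transpose_mat X *\<^sub>v (X *\<^sub>v u j) \<in> carrier_vec c"
        by (intro mult_mat_vec_carrier[of _ c r]) (use X uj in auto)
      then show ?thesis using comm_scalar_prod[OF uj] by blast
    qed
    also have "\<dots> = (X *\<^sub>v u j) \<bullet> (X *\<^sub>v u j)"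
      by (rule transpose_vec_mult_scalar[OF X uj]) (use X uj in auto)
    finally have "d j = (X *\<^sub>v u j) \<bullet> (X *\<^sub>v u j)" .
    then show ?thesis using sprod_self_nonneg[of "X *\<^sub>v u j"] by linarith
  qed
  define L where "L = map (\<lambda>j. sqrt (d j)) [0..<c]"
  have "proots (char_poly ?G) = mset (map d [0..<c])"
    unfolding es_char_poly[OF es G] proots_linear_prod ..
  moreover have "map (\<lambda>j. sqrt (d j)) [0..<c] = map sqrt (map d [0..<c])" by simp
  ultimately have "image_mset sqrt (proots (char_poly ?G)) = mset L" unfolding L_def by (simp only: mset_map)
  then have sv0: "sing_vals X = rev (sort L)" unfolding sing_vals_def by simp
  have "sort L = rev L"
  proof (rule properties_for_sort)
    show "mset (rev L) = mset L" by simp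
    show "sorted (rev L)"
      unfolding sorted_iff_nth_mono
    proof (intro allI impI)
      fix i j assume ij: "i \<le> j" "j < length (rev L)"
      then have "c - 1 - j \<le> c - 1 - i" "c - 1 - i < c" unfolding L_def by auto
      then have "d (c - 1 - i) \<le> d (c - 1 - j)" using es_sorted[OF es G] by blast
      then show "rev L ! i \<le> rev L ! j" using ij unfolding L_def by (simp add: rev_nth)
    qed
  qed
  then have sv: "sing_vals X = L" using sv0 by simp
  have "sigma X i = (if 1 \<le> i \<and> i \<le> c then sqrt (d (i - 1)) else 0)" for i
    unfolding sigma_def sv L_def by auto
  then show ?thesis using es dnn by blast
qed

lemma wide_kernel:
  fixes P :: "real mat"
  assumes P: "P \<in> carrier_mat t k" and tk: "t < k"
  shows "\<exists>y \<in> carrier_vec k. y \<noteq> 0\<^sub>v k \<and> P *\<^sub>v y = 0\<^sub>v t"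
proof -
  define P' where "P' = mat k k (\<lambda>(i,j). if i < t then P $$ (i,j) else 0)"
  have P': "P' \<in> carrier_mat k k" by (simp add: P'_def)
  have "P' = mat\<^sub>r k k (\<lambda>i. if i = k - 1 then 0\<^sub>v k else row P' i)"
    by (rule eq_matI) (use tk in \<open>auto simp: P'_def mat_of_rows_def row_def\<close>)
  moreover have "det (mat\<^sub>r k k (\<lambda>i. if i = k - 1 then 0\<^sub>v k else row P' i)) = 0"
    by (rule det_row_0) (use tk P' in auto)
  ultimately have "det P' = 0" by simp
  then obtain y where y: "y \<in> carrier_vec k" "y \<noteq> 0\<^sub>v k" "P' *\<^sub>v y = 0\<^sub>v k"
    using det_0_iff_vec_prod_zero_field[OF P'] by auto
  have "P *\<^sub>v y = 0\<^sub>v t"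
  proof (rule eq_vecI)
    fix i assume "i < dim_vec (0\<^sub>v t :: real vec)" then have i: "i < t" by simp
    have "(P' *\<^sub>v y) $ i = 0" using y(3) i tk by simp
    moreover have "(P' *\<^sub>v y) $ i = (P *\<^sub>v y) $ i"
    proof -
      have "(P' *\<^sub>v y) $ i = (\<Sum>ia = 0..<k. P' $$ (i, ia) * y $ ia)"
        using i tk P' y(1) by (simp add: mult_mat_vec_def scalar_prod_def)
      also have "\<dots> = (\<Sum>ia = 0..<k. P $$ (i, ia) * y $ ia)"
        by (rule sum.cong[OF refl]) (use i tk in \<open>auto simp: P'_def\<close>)
      also have "\<dots> = (P *\<^sub>v y) $ i"
        using i tk P y(1) by (simp add: mult_mat_vec_def scalar_prod_def)
      finally show ?thesis .
    qed
    ultimately show "(P *\<^sub>v y) $ i = 0\<^sub>v t $ i" using i by simp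
  qed (use P in simp)
  then show ?thesis using y by blast
qed

lemma inj_dim_le:
  fixes V :: "real mat"
  assumes V: "V \<in> carrier_mat c i" and inj: "\<forall>y\<in>carrier_vec i. V *\<^sub>v y = 0\<^sub>v c \<longrightarrow> y = 0\<^sub>v i"
  shows "i \<le> c"
proof (rule ccontr)
  assume "\<not> i \<le> c"
  then obtain y where "y \<in> carrier_vec i" "y \<noteq> 0\<^sub>v i" "V *\<^sub>v y = 0\<^sub>v c" using wide_kernel[OF V] by auto
  with inj show False by blast
qed

lemma gram_quad:
  fixes X :: "real mat"
  assumes X: "X \<in> carrier_mat r c" and z: "z \<in> carrier_vec c"
  shows "(X *\<^sub>v z) \<bullet> (X *\<^sub>v z) = z \<bullet> ((transpose_mat X * X) *\<^sub>v z)"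
proof -
  have "(transpose_mat X *\<^sub>v (X *\<^sub>v z)) \<bullet> z = (X *\<^sub>v z) \<bullet> (X *\<^sub>v z)"
    by (rule transpose_vec_mult_scalar[OF X z]) (use X z in auto)
  moreover have "transpose_mat X *\<^sub>v (X *\<^sub>v z) = (transpose_mat X * X) *\<^sub>v z"
    by (rule assoc_mult_mat_vec[of _ c r X c, symmetric]) (use X z in auto)
  moreover have "(transpose_mat X * X) *\<^sub>v z \<in> carrier_vec c"
    by (rule mult_mat_vec_carrier[of _ c c]) (use X z in auto)
  ultimately show ?thesis using comm_scalar_prod[OF z] by metis
qed

lemma row_of_sys:
  assumes "u a \<in> carrier_vec c" "a < t"
  shows "row (mat t c (\<lambda>(a,b). u a $ b)) a = u a"
  using assms by (auto intro!: eq_vecI)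

lemma top_block:
  assumes on: "orthonormal_sys c u" and ic: "i \<le> c"
  defines "V \<equiv> Umat c u * mat c i (\<lambda>(a,b). if a = b then 1 else 0)"
  shows "V \<in> carrier_mat c i"
    and "\<And>y. y \<in> carrier_vec i \<Longrightarrow> V *\<^sub>v y \<in> carrier_vec c"
    and "\<And>y j. y \<in> carrier_vec i \<Longrightarrow> j < c \<Longrightarrow> u j \<bullet> (V *\<^sub>v y) = (if j < i then y $ j else 0)"
    and "\<And>y. y \<in> carrier_vec i \<Longrightarrow> V *\<^sub>v y = 0\<^sub>v c \<Longrightarrow> y = 0\<^sub>v i"
proof -
  let ?E = "mat c i (\<lambda>(a,b). if a = b then (1::real) else 0)"
  have U: "Umat c u \<in> carrier_mat c c" using Umat_carrier[OF on] .
  show V: "V \<in> carrier_mat c i" unfolding V_def using U by simp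
  show Vc: "V *\<^sub>v y \<in> carrier_vec c" if "y \<in> carrier_vec i" for y using V that by simp
  have Ey: "?E *\<^sub>v y = vec c (\<lambda>a. if a < i then y $ a else 0)" if y: "y \<in> carrier_vec i" for y
    by (rule eq_vecI) (use y in \<open>auto simp: scalar_prod_def row_def if_distrib[of "\<lambda>x. x * _"] sum.delta cong: if_cong\<close>)
  have Vy: "V *\<^sub>v y = Umat c u *\<^sub>v (?E *\<^sub>v y)" if y: "y \<in> carrier_vec i" for y
    unfolding V_def by (rule assoc_mult_mat_vec[OF U, of _ i]) (use y in auto)
  show co: "u j \<bullet> (V *\<^sub>v y) = (if j < i then y $ j else 0)" if y: "y \<in> carrier_vec i" and j: "j < c" for y j
    unfolding Vy[OF y] using Umat_coord[OF on, of "?E *\<^sub>v y" j] Ey[OF y] j by simp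
  show "y = 0\<^sub>v i" if y: "y \<in> carrier_vec i" and z: "V *\<^sub>v y = 0\<^sub>v c" for y
  proof (rule eq_vecI)
    fix j assume "j < dim_vec (0\<^sub>v i :: real vec)" then have j: "j < i" by simp
    have "u j \<bullet> (V *\<^sub>v y) = 0" unfolding z using on_carrier[OF on, of j] j ic by simp
    then show "y $ j = 0\<^sub>v i $ j" using co[OF y, of j] j ic by simp
  qed (use y in simp)
qed

lemma sigma_char:
  fixes X :: "real mat"
  assumes X: "X \<in> carrier_mat r c"
  obtains u d where "eig_sys (transpose_mat X * X) c u d" "\<And>j. j < c \<Longrightarrow> 0 \<le> d j"
    "\<And>i. sigma X i = (if 1 \<le> i \<and> i \<le> c then sqrt (d (i - 1)) else 0)"
  using gram_spec[OF X] by blast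

lemma sigma_nonneg: "0 \<le> sigma X i"
proof -
  have X: "X \<in> carrier_mat (dim_row X) (dim_col X)" by auto
  obtain u d where "eig_sys (transpose_mat X * X) (dim_col X) u d" "\<And>j. j < dim_col X \<Longrightarrow> 0 \<le> d j"
    "\<And>i. sigma X i = (if 1 \<le> i \<and> i \<le> dim_col X then sqrt (d (i - 1)) else 0)"
    by (rule sigma_char[OF X], blast)
  then show ?thesis by auto
qed

lemma sigma_mono: assumes "1 \<le> i" "i \<le> j" shows "sigma X j \<le> sigma X i"
proof -
  have X: "X \<in> carrier_mat (dim_row X) (dim_col X)" by auto
  obtain u d where es: "eig_sys (transpose_mat X * X) (dim_col X) u d" and "\<And>j. j < dim_col X \<Longrightarrow> 0 \<le> d j"
    and sg: "\<And>i. sigma X i = (if 1 \<le> i \<and> i \<le> dim_col X then sqrt (d (i - 1)) else 0)"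
    by (rule sigma_char[OF X], blast)
  have G: "transpose_mat X * X \<in> carrier_mat (dim_col X) (dim_col X)" by (rule carrier_matI) auto
  show ?thesis
  proof (cases "j \<le> dim_col X")
    case True
    then have "d (j - 1) \<le> d (i - 1)" using es_sorted[OF es G, of "i - 1" "j - 1"] assms by simp
    then show ?thesis using sg assms True by simp
  next
    case False
    then show ?thesis using sg[of j] sigma_nonneg[of X i] by simp
  qed
qed

lemma CF_lo:
  fixes X V :: "real mat"
  assumes X: "X \<in> carrier_mat r c" and V: "V \<in> carrier_mat c i" and i: "1 \<le> i"
    and inj: "\<forall>y\<in>carrier_vec i. V *\<^sub>v y = 0\<^sub>v c \<longrightarrow> y = 0\<^sub>v i"
    and g: "0 \<le> \<gamma>"
    and bound: "\<forall>y\<in>carrier_vec i. \<gamma>^2 * ((V *\<^sub>v y) \<bullet> (V *\<^sub>v y)) \<le> (X *\<^sub>v (V *\<^sub>v y)) \<bullet> (X *\<^sub>v (V *\<^sub>v y))"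
  shows "\<gamma> \<le> sigma X i"
proof -
  have ic: "i \<le> c" using inj_dim_le[OF V inj] .
  obtain u d where es: "eig_sys (transpose_mat X * X) c u d" and dnn: "\<And>j. j < c \<Longrightarrow> 0 \<le> d j"
    and sg: "\<And>i. sigma X i = (if 1 \<le> i \<and> i \<le> c then sqrt (d (i - 1)) else 0)"
    by (rule sigma_char[OF X], blast)
  let ?G = "transpose_mat X * X"
  have G: "?G \<in> carrier_mat c c" using X by simp
  have on: "orthonormal_sys c u" using es_on[OF es G] .
  define Ut where "Ut = mat (i - 1) c (\<lambda>(a,b). u a $ b)"
  have Ut: "Ut \<in> carrier_mat (i - 1) c" unfolding Ut_def by simp
  have P: "Ut * V \<in> carrier_mat (i - 1) i" using Ut V by simp
  obtain y where y: "y \<in> carrier_vec i" "y \<noteq> 0\<^sub>v i" "(Ut * V) *\<^sub>v y = 0\<^sub>v (i - 1)"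
    using wide_kernel[OF P] i by auto
  define z where "z = V *\<^sub>v y"
  have z: "z \<in> carrier_vec c" unfolding z_def using V y by simp
  have z0: "z \<noteq> 0\<^sub>v c" using inj y unfolding z_def by blast
  have coord0: "u a \<bullet> z = 0" if a: "a < i - 1" for a
  proof -
    have "(Ut * V) *\<^sub>v y = Ut *\<^sub>v z" unfolding z_def by (rule assoc_mult_mat_vec[OF Ut V y(1)])
    then have "Ut *\<^sub>v z = 0\<^sub>v (i - 1)" using y(3) by simp
    then have "(Ut *\<^sub>v z) $ a = 0" using a by simp
    moreover have "(Ut *\<^sub>v z) $ a = row Ut a \<bullet> z" using Ut a by simp
    moreover have "row Ut a = u a" unfolding Ut_def
      by (rule row_of_sys[OF on_carrier[OF on]]) (use a ic in auto)
    ultimately show ?thesis by simp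
  qed
  have "(X *\<^sub>v z) \<bullet> (X *\<^sub>v z) = (\<Sum>j\<in>{0..<c}. d j * (u j \<bullet> z)^2)"
    unfolding gram_quad[OF X z] es_quad[OF es G z] ..
  also have "\<dots> \<le> (\<Sum>j\<in>{0..<c}. d (i - 1) * (u j \<bullet> z)^2)"
  proof (rule sum_mono)
    fix j assume "j \<in> {0..<c}"
    show "d j * (u j \<bullet> z)^2 \<le> d (i - 1) * (u j \<bullet> z)^2"
    proof (cases "j < i - 1")
      case True then show ?thesis using coord0[of j] by simp
    next
      case False
      then have "d j \<le> d (i - 1)" using es_sorted[OF es G, of "i - 1" j] \<open>j \<in> {0..<c}\<close> by simp
      then show ?thesis by (rule mult_right_mono) simp
    qed
  qed
  also have "\<dots> = d (i - 1) * (z \<bullet> z)" unfolding sq_expand[OF on z] by (simp add: sum_distrib_left)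
  finally have le1: "(X *\<^sub>v z) \<bullet> (X *\<^sub>v z) \<le> d (i - 1) * (z \<bullet> z)" .
  have "\<gamma>^2 * (z \<bullet> z) \<le> (X *\<^sub>v z) \<bullet> (X *\<^sub>v z)" using bound y(1) unfolding z_def by blast
  with le1 have "\<gamma>^2 * (z \<bullet> z) \<le> d (i - 1) * (z \<bullet> z)" by linarith
  moreover have "z \<bullet> z > 0" using sprod_self_pos[OF z z0] .
  ultimately have "\<gamma>^2 \<le> d (i - 1)" by (meson mult_le_cancel_right_pos)
  then have "\<gamma> \<le> sqrt (d (i - 1))" by (rule real_le_rsqrt)
  then show ?thesis using sg[of i] i ic by simp
qed

lemma CF_up:
  fixes X :: "real mat"
  assumes X: "X \<in> carrier_mat r c" and i: "1 \<le> i" and g: "0 \<le> \<gamma>"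
    and H: "\<And>V. V \<in> carrier_mat c i \<Longrightarrow> (\<forall>y\<in>carrier_vec i. V *\<^sub>v y = 0\<^sub>v c \<longrightarrow> y = 0\<^sub>v i) \<Longrightarrow>
        \<exists>y\<in>carrier_vec i. V *\<^sub>v y \<noteq> 0\<^sub>v c \<and> (X *\<^sub>v (V *\<^sub>v y)) \<bullet> (X *\<^sub>v (V *\<^sub>v y)) \<le> \<gamma>^2 * ((V *\<^sub>v y) \<bullet> (V *\<^sub>v y))"
  shows "sigma X i \<le> \<gamma>"
proof -
  obtain u d where es: "eig_sys (transpose_mat X * X) c u d" and dnn: "\<And>j. j < c \<Longrightarrow> 0 \<le> d j"
    and sg: "\<And>i. sigma X i = (if 1 \<le> i \<and> i \<le> c then sqrt (d (i - 1)) else 0)"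
    by (rule sigma_char[OF X], blast)
  show ?thesis
  proof (cases "i \<le> c")
    case False then show ?thesis using sg[of i] g by simp
  next
    case ic: True
    let ?G = "transpose_mat X * X"
    have G: "?G \<in> carrier_mat c c" using X by simp
    have on: "orthonormal_sys c u" using es_on[OF es G] .
    define V where "V = Umat c u * mat c i (\<lambda>(a,b). if a = b then 1 else 0)"
    note tb = top_block[OF on ic, folded V_def]
    obtain y where y: "y \<in> carrier_vec i" "V *\<^sub>v y \<noteq> 0\<^sub>v c"
      and yb: "(X *\<^sub>v (V *\<^sub>v y)) \<bullet> (X *\<^sub>v (V *\<^sub>v y)) \<le> \<gamma>^2 * ((V *\<^sub>v y) \<bullet> (V *\<^sub>v y))"
      using H[OF tb(1)] tb(4) by blast
    define z where "z = V *\<^sub>v y"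
    have z: "z \<in> carrier_vec c" unfolding z_def using tb(2)[OF y(1)] .
    have "d (i - 1) * (z \<bullet> z) = (\<Sum>j\<in>{0..<c}. d (i - 1) * (u j \<bullet> z)^2)"
      unfolding sq_expand[OF on z] by (simp add: sum_distrib_left)
    also have "\<dots> \<le> (\<Sum>j\<in>{0..<c}. d j * (u j \<bullet> z)^2)"
    proof (rule sum_mono)
      fix j assume "j \<in> {0..<c}"
      then have j: "j < c" by simp
      show "d (i - 1) * (u j \<bullet> z)^2 \<le> d j * (u j \<bullet> z)^2"
      proof (cases "j < i")
        case True
        then have "d (i - 1) \<le> d j" using es_sorted[OF es G, of j "i - 1"] ic i by simp
        then show ?thesis by (rule mult_right_mono) simp
      next
        case False then show ?thesis using tb(3)[OF y(1) j] unfolding z_def by simp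
      qed
    qed
    also have "\<dots> = (X *\<^sub>v z) \<bullet> (X *\<^sub>v z)"
      unfolding gram_quad[OF X z] es_quad[OF es G z] ..
    finally have "d (i - 1) * (z \<bullet> z) \<le> \<gamma>^2 * (z \<bullet> z)" using yb unfolding z_def by linarith
    moreover have "z \<bullet> z > 0" using sprod_self_pos[OF z] y(2) unfolding z_def by blast
    ultimately have "d (i - 1) \<le> \<gamma>^2" by simp
    then have "sqrt (d (i - 1)) \<le> \<gamma>" using g real_sqrt_le_iff[of "d (i - 1)" "\<gamma>^2"] by simp
    then show ?thesis using sg[of i] ic i by simp
  qed
qed

lemma sigma_le_transpose:
  fixes X :: "real mat"
  shows "sigma X i \<le> sigma (transpose_mat X) i"
proof -
  define r where "r = dim_row X"
  define c where "c = dim_col X"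
  have X: "X \<in> carrier_mat r c" unfolding r_def c_def by auto
  obtain u d where es: "eig_sys (transpose_mat X * X) c u d" and dnn: "\<And>j. j < c \<Longrightarrow> 0 \<le> d j"
    and sg: "\<And>i. sigma X i = (if 1 \<le> i \<and> i \<le> c then sqrt (d (i - 1)) else 0)"
    by (rule sigma_char[OF X], blast)
  show ?thesis
  proof (cases "1 \<le> i \<and> i \<le> c \<and> d (i - 1) > 0")
    case False
    then have "sigma X i = 0" using sg[of i] dnn[of "i - 1"] by auto
    then show ?thesis using sigma_nonneg by simp
  next
    case True
    then have i: "1 \<le> i" and ic: "i \<le> c" and dpos: "d (i - 1) > 0" by auto
    let ?G = "transpose_mat X * X"
    have G: "?G \<in> carrier_mat c c" using X by simp
    have on: "orthonormal_sys c u" using es_on[OF es G] .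
    define V where "V = Umat c u * mat c i (\<lambda>(a,b). if a = b then 1 else 0)"
    note tb = top_block[OF on ic, folded V_def]
    have XT: "transpose_mat X \<in> carrier_mat c r" using X by simp
    have XV: "X * V \<in> carrier_mat r i" using X tb(1) by simp
    have XVy: "(X * V) *\<^sub>v y = X *\<^sub>v (V *\<^sub>v y)" if "y \<in> carrier_vec i" for y
      by (rule assoc_mult_mat_vec[OF X tb(1) that])
    have termle: "d (i - 1) * (d j * (u j \<bullet> (V *\<^sub>v y))^2) \<le> (d j)^2 * (u j \<bullet> (V *\<^sub>v y))^2"
      if y: "y \<in> carrier_vec i" and j: "j < c" for y j
    proof (cases "j < i")
      case True
      then have "d (i - 1) \<le> d j" using es_sorted[OF es G, of j "i - 1"] ic by simp
      then have dd: "d (i - 1) * d j \<le> d j * d j" using dnn[OF j] by (simp add: mult_right_mono)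
      have s: "0 \<le> (u j \<bullet> (V *\<^sub>v y))^2" by simp
      have "(d (i - 1) * d j) * (u j \<bullet> (V *\<^sub>v y))^2 \<le> (d j * d j) * (u j \<bullet> (V *\<^sub>v y))^2"
        by (rule mult_right_mono[OF dd s])
      then show ?thesis by (simp only: power2_eq_square[of "d j"] mult.assoc)
    next
      case False
      then show ?thesis using tb(3)[OF y j] by simp
    qed
    have "sqrt (d (i - 1)) \<le> sigma (transpose_mat X) i"
    proof (rule CF_lo[OF XT XV i])
      show "\<forall>y\<in>carrier_vec i. (X * V) *\<^sub>v y = 0\<^sub>v r \<longrightarrow> y = 0\<^sub>v i"
      proof (intro ballI impI)
        fix y :: "real vec" assume y: "y \<in> carrier_vec i" and z: "(X * V) *\<^sub>v y = 0\<^sub>v r"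
        let ?z = "V *\<^sub>v y"
        have zc: "?z \<in> carrier_vec c" using tb(2)[OF y] .
        have "0 = (X *\<^sub>v ?z) \<bullet> (X *\<^sub>v ?z)" using z XVy[OF y] by simp
        also have "\<dots> = (\<Sum>j\<in>{0..<c}. d j * (u j \<bullet> ?z)^2)"
          unfolding gram_quad[OF X zc] es_quad[OF es G zc] ..
        finally have s0: "(\<Sum>j\<in>{0..<c}. d j * (u j \<bullet> ?z)^2) = 0" by simp
        have "\<forall>j\<in>{0..<c}. d j * (u j \<bullet> ?z)^2 = 0"
          using s0 sum_nonneg_eq_0_iff[of "{0..<c}" "\<lambda>j. d j * (u j \<bullet> ?z)^2"] dnn by auto
        show "y = 0\<^sub>v i"
        proof (rule eq_vecI)
          fix j assume "j < dim_vec (0\<^sub>v i :: real vec)" then have j: "j < i" by simp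
          have "d j * (u j \<bullet> ?z)^2 = 0" using \<open>\<forall>j\<in>{0..<c}. _\<close> j ic by auto
          moreover have "d j > 0"
          proof -
            have "j \<le> i - 1" "i - 1 < c" using j ic i by auto
            then have "d (i - 1) \<le> d j" using es_sorted[OF es G] by blast
            then show ?thesis using dpos by linarith
          qed
          ultimately have "u j \<bullet> ?z = 0" by simp
          then show "y $ j = 0\<^sub>v i $ j" using tb(3)[OF y, of j] j ic by simp
        qed (use y in simp)
      qed
      show "0 \<le> sqrt (d (i - 1))" using dpos by simp
      show "\<forall>y\<in>carrier_vec i. (sqrt (d (i - 1)))^2 * (((X * V) *\<^sub>v y) \<bullet> ((X * V) *\<^sub>v y))
              \<le> (transpose_mat X *\<^sub>v ((X * V) *\<^sub>v y)) \<bullet> (transpose_mat X *\<^sub>v ((X * V) *\<^sub>v y))"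
      proof
        fix y :: "real vec" assume y: "y \<in> carrier_vec i"
        let ?z = "V *\<^sub>v y"
        have zc: "?z \<in> carrier_vec c" using tb(2)[OF y] .
        have GX: "transpose_mat X *\<^sub>v (X *\<^sub>v ?z) = ?G *\<^sub>v ?z"
          by (rule assoc_mult_mat_vec[of _ c r X c, symmetric]) (use X zc in auto)
        have "(sqrt (d (i - 1)))^2 * ((X *\<^sub>v ?z) \<bullet> (X *\<^sub>v ?z)) = d (i - 1) * (\<Sum>j\<in>{0..<c}. d j * (u j \<bullet> ?z)^2)"
          unfolding gram_quad[OF X zc] es_quad[OF es G zc] using dpos by simp
        also have "\<dots> = (\<Sum>j\<in>{0..<c}. d (i - 1) * (d j * (u j \<bullet> ?z)^2))" by (simp add: sum_distrib_left)
        also have "\<dots> \<le> (\<Sum>j\<in>{0..<c}. (d j)^2 * (u j \<bullet> ?z)^2)"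
          by (rule sum_mono) (use termle[OF y] in auto)
        also have "\<dots> = (?G *\<^sub>v ?z) \<bullet> (?G *\<^sub>v ?z)" using es_sq[OF es G zc] by simp
        finally show "(sqrt (d (i - 1)))^2 * (((X * V) *\<^sub>v y) \<bullet> ((X * V) *\<^sub>v y))
              \<le> (transpose_mat X *\<^sub>v ((X * V) *\<^sub>v y)) \<bullet> (transpose_mat X *\<^sub>v ((X * V) *\<^sub>v y))"
          unfolding XVy[OF y] GX .
      qed
    qed
    then show ?thesis using sg[of i] i ic by simp
  qed
qed

lemma sigma_transpose: "sigma (transpose_mat X) i = sigma X i"
  using sigma_le_transpose[of X i] sigma_le_transpose[of "transpose_mat X" i] by simp

lemma smult_mat_vec:
  fixes Q :: "real mat"
  assumes Q: "Q \<in> carrier_mat m l" and p: "p \<in> carrier_vec l"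
  shows "(c \<cdot>\<^sub>m Q) *\<^sub>v p = c \<cdot>\<^sub>v (Q *\<^sub>v p)"
  by (rule eq_vecI) (use Q p in \<open>auto simp: mult_mat_vec_def scalar_prod_def sum_distrib_left algebra_simps\<close>)

lemma iso_cols:
  fixes Q :: "real mat"
  assumes Q: "Q \<in> carrier_mat m l" "transpose_mat Q * Q = 1\<^sub>m l" and p: "p \<in> carrier_vec l"
  shows "(Q *\<^sub>v p) \<bullet> (Q *\<^sub>v p) = p \<bullet> p"
proof -
  have "(transpose_mat Q *\<^sub>v (Q *\<^sub>v p)) \<bullet> p = (Q *\<^sub>v p) \<bullet> (Q *\<^sub>v p)"
    by (rule transpose_vec_mult_scalar[OF Q(1) p]) (use Q p in auto)
  moreover have "transpose_mat Q *\<^sub>v (Q *\<^sub>v p) = p"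
    using assoc_mult_mat_vec[of "transpose_mat Q" l m Q l p, symmetric] Q p by simp
  ultimately show ?thesis by simp
qed

lemma iso_inj:
  fixes Q :: "real mat"
  assumes Q: "Q \<in> carrier_mat m l" "transpose_mat Q * Q = 1\<^sub>m l" and p: "p \<in> carrier_vec l"
    and z: "Q *\<^sub>v p = 0\<^sub>v m"
  shows "p = 0\<^sub>v l"
proof (rule ccontr)
  assume "p \<noteq> 0\<^sub>v l"
  then have "p \<bullet> p > 0" using sprod_self_pos[OF p] by simp
  moreover have "(Q *\<^sub>v p) \<bullet> (Q *\<^sub>v p) = 0" using z by simp
  ultimately show False using iso_cols[OF Q p] by simp
qed

lemma iso_dim:
  fixes Q :: "real mat"
  assumes Q: "Q \<in> carrier_mat m l" "transpose_mat Q * Q = 1\<^sub>m l"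
  shows "l \<le> m"
  using inj_dim_le[OF Q(1)] iso_inj[OF Q] by blast

lemma contract:
  fixes Q :: "real mat"
  assumes Q: "Q \<in> carrier_mat m l" "transpose_mat Q * Q = 1\<^sub>m l" and w: "w \<in> carrier_vec m"
  shows "(transpose_mat Q *\<^sub>v w) \<bullet> (transpose_mat Q *\<^sub>v w) \<le> w \<bullet> w"
proof -
  define s where "s = transpose_mat Q *\<^sub>v w"
  define p where "p = Q *\<^sub>v s"
  have s: "s \<in> carrier_vec l" unfolding s_def using Q w by simp
  have p: "p \<in> carrier_vec m" unfolding p_def using Q s by simp
  have wp: "w \<bullet> p = s \<bullet> s"
  proof -
    have "(transpose_mat Q *\<^sub>v w) \<bullet> s = w \<bullet> (Q *\<^sub>v s)"
      by (rule transpose_vec_mult_scalar[OF Q(1) s w])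
    then show ?thesis unfolding p_def s_def by simp
  qed
  have pp: "p \<bullet> p = s \<bullet> s" unfolding p_def using iso_cols[OF Q s] .
  have "0 \<le> (w - p) \<bullet> (w - p)" by (rule sprod_self_nonneg)
  also have "(w - p) \<bullet> (w - p) = w \<bullet> w - 2 * (w \<bullet> p) + p \<bullet> p"
    using w p by (simp add: scalar_prod_def power2_eq_square algebra_simps sum.distrib sum_subtractf sum_distrib_left)
  finally show ?thesis unfolding s_def[symmetric] using wp pp by simp
qed

lemma B_apply:
  fixes A Q :: "real mat"
  assumes A: "A \<in> carrier_mat m n" and Q: "Q \<in> carrier_mat m l" and p: "p \<in> carrier_vec l"
  shows "(A * transpose_mat A * Q - \<alpha> \<cdot>\<^sub>m Q) *\<^sub>v p
     = (A * transpose_mat A) *\<^sub>v (Q *\<^sub>v p) - \<alpha> \<cdot>\<^sub>v (Q *\<^sub>v p)"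
proof -
  have G: "A * transpose_mat A \<in> carrier_mat m m" using A by simp
  have "(A * transpose_mat A * Q - \<alpha> \<cdot>\<^sub>m Q) *\<^sub>v p = (A * transpose_mat A * Q) *\<^sub>v p - (\<alpha> \<cdot>\<^sub>m Q) *\<^sub>v p"
    by (rule minus_mult_distrib_mat_vec[of _ m l]) (use G Q p in auto)
  also have "(A * transpose_mat A * Q) *\<^sub>v p = (A * transpose_mat A) *\<^sub>v (Q *\<^sub>v p)"
    by (rule assoc_mult_mat_vec[OF G Q p])
  also have "(\<alpha> \<cdot>\<^sub>m Q) *\<^sub>v p = \<alpha> \<cdot>\<^sub>v (Q *\<^sub>v p)" by (rule smult_mat_vec[OF Q p])
  finally show ?thesis .
qed

lemma UB_core:
  fixes A Q V :: "real mat"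
  assumes A: "A \<in> carrier_mat m n" and Q: "Q \<in> carrier_mat m l" "transpose_mat Q * Q = 1\<^sub>m l"
    and i: "1 \<le> i" "i \<le> l" and al: "2 * \<alpha> \<le> (sigma A l)^2"
    and V: "V \<in> carrier_mat l i" and inj: "\<forall>y\<in>carrier_vec i. V *\<^sub>v y = 0\<^sub>v l \<longrightarrow> y = 0\<^sub>v i"
  shows "\<exists>y\<in>carrier_vec i. V *\<^sub>v y \<noteq> 0\<^sub>v l \<and>
     ((A * transpose_mat A * Q - \<alpha> \<cdot>\<^sub>m Q) *\<^sub>v (V *\<^sub>v y)) \<bullet> ((A * transpose_mat A * Q - \<alpha> \<cdot>\<^sub>m Q) *\<^sub>v (V *\<^sub>v y))
       \<le> ((sigma A i)^2 - \<alpha>)^2 * ((V *\<^sub>v y) \<bullet> (V *\<^sub>v y))"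
proof -
  have lm: "l \<le> m" using iso_dim[OF Q] .
  have AT: "transpose_mat A \<in> carrier_mat n m" using A by simp
  obtain u d where es0: "eig_sys (transpose_mat (transpose_mat A) * transpose_mat A) m u d"
    and dnn: "\<And>j. j < m \<Longrightarrow> 0 \<le> d j"
    and sg: "\<And>i. sigma (transpose_mat A) i = (if 1 \<le> i \<and> i \<le> m then sqrt (d (i - 1)) else 0)"
    by (rule sigma_char[OF AT], blast)
  let ?G = "A * transpose_mat A"
  have es: "eig_sys ?G m u d" using es0 by simp
  have G: "?G \<in> carrier_mat m m" using A by simp
  have on: "orthonormal_sys m u" using es_on[OF es G] .
  have sA: "(sigma A j)^2 = d (j - 1)" if "1 \<le> j" "j \<le> m" for j
    using sg[of j] sigma_transpose[of A j] that dnn[of "j - 1"] by simp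
  have dil: "2 * \<alpha> \<le> d (i - 1)"
  proof -
    have "d (l - 1) \<le> d (i - 1)" using es_sorted[OF es G, of "i - 1" "l - 1"] i lm by simp
    then show ?thesis using al sA[of l] i lm by simp
  qed
  define Ut where "Ut = mat (i - 1) m (\<lambda>(a,b). u a $ b)"
  have Ut: "Ut \<in> carrier_mat (i - 1) m" unfolding Ut_def by simp
  have QV: "Q * V \<in> carrier_mat m i" using Q V by simp
  have P: "Ut * (Q * V) \<in> carrier_mat (i - 1) i" using Ut QV by simp
  obtain y where y: "y \<in> carrier_vec i" "y \<noteq> 0\<^sub>v i" "(Ut * (Q * V)) *\<^sub>v y = 0\<^sub>v (i - 1)"
    using wide_kernel[OF P] i by auto
  have Vy0: "V *\<^sub>v y \<noteq> 0\<^sub>v l" using inj y(1,2) by blast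
  have Vyc: "V *\<^sub>v y \<in> carrier_vec l" using V y(1) by simp
  define w where "w = Q *\<^sub>v (V *\<^sub>v y)"
  have w: "w \<in> carrier_vec m" unfolding w_def using Q Vyc by simp
  have ww: "w \<bullet> w = (V *\<^sub>v y) \<bullet> (V *\<^sub>v y)" unfolding w_def by (rule iso_cols[OF Q Vyc])
  have coord0: "u a \<bullet> w = 0" if a: "a < i - 1" for a
  proof -
    have "(Ut * (Q * V)) *\<^sub>v y = Ut *\<^sub>v ((Q * V) *\<^sub>v y)" by (rule assoc_mult_mat_vec[OF Ut QV y(1)])
    also have "(Q * V) *\<^sub>v y = w" unfolding w_def by (rule assoc_mult_mat_vec[OF Q(1) V y(1)])
    finally have "Ut *\<^sub>v w = 0\<^sub>v (i - 1)" using y(3) by simp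
    then have "(Ut *\<^sub>v w) $ a = 0" using a by simp
    moreover have "(Ut *\<^sub>v w) $ a = row Ut a \<bullet> w" using Ut a by simp
    moreover have "row Ut a = u a" unfolding Ut_def
      by (rule row_of_sys[OF on_carrier[OF on]]) (use a i lm in auto)
    ultimately show ?thesis by simp
  qed
  have "((A * transpose_mat A * Q - \<alpha> \<cdot>\<^sub>m Q) *\<^sub>v (V *\<^sub>v y)) = ?G *\<^sub>v w - \<alpha> \<cdot>\<^sub>v w"
    unfolding w_def by (rule B_apply[OF A Q(1) Vyc])
  then have "((A * transpose_mat A * Q - \<alpha> \<cdot>\<^sub>m Q) *\<^sub>v (V *\<^sub>v y)) \<bullet> ((A * transpose_mat A * Q - \<alpha> \<cdot>\<^sub>m Q) *\<^sub>v (V *\<^sub>v y))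
     = (\<Sum>j\<in>{0..<m}. (d j - \<alpha>)^2 * (u j \<bullet> w)^2)"
    using es_shift_sq[OF es G w] by simp
  also have "\<dots> \<le> (\<Sum>j\<in>{0..<m}. (d (i - 1) - \<alpha>)^2 * (u j \<bullet> w)^2)"
  proof (rule sum_mono)
    fix j assume "j \<in> {0..<m}"
    then have j: "j < m" by simp
    show "(d j - \<alpha>)^2 * (u j \<bullet> w)^2 \<le> (d (i - 1) - \<alpha>)^2 * (u j \<bullet> w)^2"
    proof (cases "j < i - 1")
      case True then show ?thesis using coord0[OF True] by simp
    next
      case False
      then have "d j \<le> d (i - 1)" using es_sorted[OF es G, of "i - 1" j] j by simp
      moreover have "0 \<le> d j" using dnn[OF j] .
      ultimately have "\<bar>d j - \<alpha>\<bar> \<le> \<bar>d (i - 1) - \<alpha>\<bar>" using dil by linarith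
      then have "(d j - \<alpha>)^2 \<le> (d (i - 1) - \<alpha>)^2" by (simp add: abs_le_square_iff)
      then show ?thesis by (rule mult_right_mono) simp
    qed
  qed
  also have "\<dots> = (d (i - 1) - \<alpha>)^2 * (w \<bullet> w)" unfolding sq_expand[OF on w] by (simp add: sum_distrib_left)
  also have "\<dots> = ((sigma A i)^2 - \<alpha>)^2 * ((V *\<^sub>v y) \<bullet> (V *\<^sub>v y))" using sA[of i] i lm ww by simp
  finally show ?thesis using y(1) Vy0 by blast
qed

lemma UB:
  fixes A Q :: "real mat"
  assumes A: "A \<in> carrier_mat m n" and Q: "Q \<in> carrier_mat m l" "transpose_mat Q * Q = 1\<^sub>m l"
    and i: "1 \<le> i" "i \<le> l" and al: "2 * \<alpha> \<le> (sigma A l)^2" "0 \<le> \<alpha>"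
  shows "sigma (A * transpose_mat A * Q - \<alpha> \<cdot>\<^sub>m Q) i \<le> (sigma A i)^2 - \<alpha>"
proof -
  have B: "A * transpose_mat A * Q - \<alpha> \<cdot>\<^sub>m Q \<in> carrier_mat m l" using Q by (auto intro!: carrier_matI)
  have "sigma A l \<le> sigma A i" using sigma_mono[of i l A] i by simp
  then have "(sigma A l)^2 \<le> (sigma A i)^2" using sigma_nonneg[of A l] by (simp add: power_mono)
  then have g: "0 \<le> (sigma A i)^2 - \<alpha>" using al by linarith
  show ?thesis
    by (rule CF_up[OF B i(1) g]) (rule UB_core[OF A Q i al(1)])
qed

lemma LB:
  fixes A Q :: "real mat"
  assumes A: "A \<in> carrier_mat m n" and Q: "Q \<in> carrier_mat m l" "transpose_mat Q * Q = 1\<^sub>m l"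
    and i: "1 \<le> i" "i \<le> l" and al: "0 \<le> \<alpha>"
  shows "(sigma (transpose_mat Q * A) i)^2 \<le> sigma (A * transpose_mat A * Q - \<alpha> \<cdot>\<^sub>m Q) i + \<alpha>"
proof -
  let ?B = "A * transpose_mat A * Q - \<alpha> \<cdot>\<^sub>m Q"
  let ?G = "A * transpose_mat A"
  have B: "?B \<in> carrier_mat m l" using Q by (auto intro!: carrier_matI)
  have G: "?G \<in> carrier_mat m m" using A by simp
  define Y where "Y = transpose_mat A * Q"
  have Y: "Y \<in> carrier_mat n l" unfolding Y_def using A Q by simp
  have YT: "transpose_mat Y = transpose_mat Q * A"
    unfolding Y_def using transpose_mult[of "transpose_mat A" n m Q l] A Q by simp
  have s1: "sigma (transpose_mat Q * A) i = sigma Y i" using sigma_transpose[of Y i] YT by simp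
  obtain u \<mu> where es: "eig_sys (transpose_mat Y * Y) l u \<mu>" and mnn: "\<And>j. j < l \<Longrightarrow> 0 \<le> \<mu> j"
    and sg: "\<And>i. sigma Y i = (if 1 \<le> i \<and> i \<le> l then sqrt (\<mu> (i - 1)) else 0)"
    by (rule sigma_char[OF Y], blast)
  have C: "transpose_mat Y * Y \<in> carrier_mat l l" using Y by simp
  have on: "orthonormal_sys l u" using es_on[OF es C] .
  have sq: "(sigma (transpose_mat Q * A) i)^2 = \<mu> (i - 1)" using s1 sg[of i] i mnn[of "i - 1"] by simp
  show ?thesis
  proof (cases "\<mu> (i - 1) \<le> \<alpha>")
    case True then show ?thesis using sq sigma_nonneg[of ?B i] by simp
  next
    case False
    define \<gamma> where "\<gamma> = \<mu> (i - 1) - \<alpha>"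
    have g: "0 < \<gamma>" using False \<gamma>_def by simp
    define V where "V = Umat l u * mat l i (\<lambda>(a,b). if a = b then 1 else 0)"
    note tb = top_block[OF on i(2), folded V_def]
    have "\<gamma> \<le> sigma ?B i"
    proof (rule CF_lo[OF B tb(1) i(1)])
      show "\<forall>y\<in>carrier_vec i. V *\<^sub>v y = 0\<^sub>v l \<longrightarrow> y = 0\<^sub>v i" using tb(4) by blast
      show "0 \<le> \<gamma>" using g by simp
      show "\<forall>y\<in>carrier_vec i. \<gamma>^2 * ((V *\<^sub>v y) \<bullet> (V *\<^sub>v y)) \<le> (?B *\<^sub>v (V *\<^sub>v y)) \<bullet> (?B *\<^sub>v (V *\<^sub>v y))"
      proof
        fix y :: "real vec" assume y: "y \<in> carrier_vec i"
        define z where "z = V *\<^sub>v y"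
        have z: "z \<in> carrier_vec l" unfolding z_def using tb(2)[OF y] .
        have Qz: "Q *\<^sub>v z \<in> carrier_vec m" using Q z by simp
        have Bz: "?B *\<^sub>v z = ?G *\<^sub>v (Q *\<^sub>v z) - \<alpha> \<cdot>\<^sub>v (Q *\<^sub>v z)" by (rule B_apply[OF A Q(1) z])
        have Bzc: "?B *\<^sub>v z \<in> carrier_vec m" using B z by simp
        have "transpose_mat Q *\<^sub>v (?B *\<^sub>v z) = (transpose_mat Y * Y) *\<^sub>v z - \<alpha> \<cdot>\<^sub>v z"
        proof -
          have GQz: "?G *\<^sub>v (Q *\<^sub>v z) \<in> carrier_vec m" using G Qz by simp
          have "transpose_mat Q *\<^sub>v (?B *\<^sub>v z) = transpose_mat Q *\<^sub>v (?G *\<^sub>v (Q *\<^sub>v z)) - transpose_mat Q *\<^sub>v (\<alpha> \<cdot>\<^sub>v (Q *\<^sub>v z))"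
            unfolding Bz by (rule mult_minus_distrib_mat_vec[of _ l m]) (use Q GQz Qz in auto)
          also have "transpose_mat Q *\<^sub>v (\<alpha> \<cdot>\<^sub>v (Q *\<^sub>v z)) = \<alpha> \<cdot>\<^sub>v (transpose_mat Q *\<^sub>v (Q *\<^sub>v z))"
            by (rule mult_mat_vec[of _ l m]) (use Q Qz in auto)
          also have "transpose_mat Q *\<^sub>v (Q *\<^sub>v z) = z"
            using assoc_mult_mat_vec[of "transpose_mat Q" l m Q l z, symmetric] Q z by simp
          also have "transpose_mat Q *\<^sub>v (?G *\<^sub>v (Q *\<^sub>v z)) = (transpose_mat Y * Y) *\<^sub>v z"
          proof -
            have "(transpose_mat Y * Y) *\<^sub>v z = transpose_mat Y *\<^sub>v (Y *\<^sub>v z)"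
              by (rule assoc_mult_mat_vec[of _ l n Y l]) (use Y z in auto)
            also have "Y *\<^sub>v z = transpose_mat A *\<^sub>v (Q *\<^sub>v z)" unfolding Y_def
              by (rule assoc_mult_mat_vec[of _ n m Q l]) (use A Q z in auto)
            also have "transpose_mat Y *\<^sub>v (transpose_mat A *\<^sub>v (Q *\<^sub>v z)) = transpose_mat Q *\<^sub>v (A *\<^sub>v (transpose_mat A *\<^sub>v (Q *\<^sub>v z)))"
              unfolding YT by (rule assoc_mult_mat_vec[of _ l m A n]) (use A Q Qz in auto)
            also have "A *\<^sub>v (transpose_mat A *\<^sub>v (Q *\<^sub>v z)) = ?G *\<^sub>v (Q *\<^sub>v z)"
              by (rule assoc_mult_mat_vec[of _ m n "transpose_mat A" m, symmetric]) (use A Qz in auto)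
            finally show ?thesis by simp
          qed
          finally show ?thesis .
        qed
        then have "(transpose_mat Y * Y *\<^sub>v z - \<alpha> \<cdot>\<^sub>v z) \<bullet> (transpose_mat Y * Y *\<^sub>v z - \<alpha> \<cdot>\<^sub>v z) \<le> (?B *\<^sub>v z) \<bullet> (?B *\<^sub>v z)"
          using contract[OF Q Bzc] by simp
        moreover have "(transpose_mat Y * Y *\<^sub>v z - \<alpha> \<cdot>\<^sub>v z) \<bullet> (transpose_mat Y * Y *\<^sub>v z - \<alpha> \<cdot>\<^sub>v z)
            = (\<Sum>j\<in>{0..<l}. (\<mu> j - \<alpha>)^2 * (u j \<bullet> z)^2)" by (rule es_shift_sq[OF es C z])
        moreover have "\<gamma>^2 * (z \<bullet> z) \<le> (\<Sum>j\<in>{0..<l}. (\<mu> j - \<alpha>)^2 * (u j \<bullet> z)^2)"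
        proof -
          have "\<gamma>^2 * (z \<bullet> z) = (\<Sum>j\<in>{0..<l}. \<gamma>^2 * (u j \<bullet> z)^2)"
            unfolding sq_expand[OF on z] by (simp add: sum_distrib_left)
          also have "\<dots> \<le> (\<Sum>j\<in>{0..<l}. (\<mu> j - \<alpha>)^2 * (u j \<bullet> z)^2)"
          proof (rule sum_mono)
            fix j assume "j \<in> {0..<l}"
            then have j: "j < l" by simp
            show "\<gamma>^2 * (u j \<bullet> z)^2 \<le> (\<mu> j - \<alpha>)^2 * (u j \<bullet> z)^2"
            proof (cases "j < i")
              case True
              then have "\<mu> (i - 1) \<le> \<mu> j" using es_sorted[OF es C, of j "i - 1"] i by simp
              then have "\<gamma> \<le> \<mu> j - \<alpha>" unfolding \<gamma>_def by simp
              then have "\<gamma>^2 \<le> (\<mu> j - \<alpha>)^2" using g by (simp add: power_mono)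
              then show ?thesis by (rule mult_right_mono) simp
            next
              case False then show ?thesis using tb(3)[OF y j] unfolding z_def by simp
            qed
          qed
          finally show ?thesis .
        qed
        ultimately show "\<gamma>^2 * ((V *\<^sub>v y) \<bullet> (V *\<^sub>v y)) \<le> (?B *\<^sub>v (V *\<^sub>v y)) \<bullet> (?B *\<^sub>v (V *\<^sub>v y))"
          unfolding z_def[symmetric] by linarith
      qed
    qed
    then show ?thesis using sq \<gamma>_def by simp
  qed
qed

lemma svd_lower:
  assumes svd: "econ_svd B Q' S W m l" and l: "0 < l" and y: "y \<in> carrier_vec l"
  shows "(S $$ (l - 1, l - 1))^2 * (y \<bullet> y) \<le> (B *\<^sub>v y) \<bullet> (B *\<^sub>v y)"
proof -
  from svd have Q': "Q' \<in> carrier_mat m l" "transpose_mat Q' * Q' = 1\<^sub>m l"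
    and W: "W \<in> carrier_mat l l" "transpose_mat W * W = 1\<^sub>m l"
    and S: "S \<in> carrier_mat l l" and Sd: "diagonal_mat S" and Snn: "\<forall>i<l. 0 \<le> S $$ (i, i)"
    and Smon: "\<forall>i j. i \<le> j \<longrightarrow> j < l \<longrightarrow> S $$ (j, j) \<le> S $$ (i, i)"
    and Beq: "B = Q' * S * transpose_mat W"
    unfolding econ_svd_def orthonormal_cols_def by auto
  have WWt: "W * transpose_mat W = 1\<^sub>m l" using mat_mult_left_right_inverse[of "transpose_mat W" l W] W by auto
  have WT: "transpose_mat W \<in> carrier_mat l l" "transpose_mat (transpose_mat W) * transpose_mat W = 1\<^sub>m l"
    using W(1) WWt by auto
  define z where "z = transpose_mat W *\<^sub>v y"
  have z: "z \<in> carrier_vec l" unfolding z_def using W y by simp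
  have zz: "z \<bullet> z = y \<bullet> y" unfolding z_def by (rule iso_cols[OF WT y])
  have Sz: "S *\<^sub>v z \<in> carrier_vec l" using S z by simp
  have By: "B *\<^sub>v y = Q' *\<^sub>v (S *\<^sub>v z)"
  proof -
    have "B *\<^sub>v y = (Q' * S) *\<^sub>v (transpose_mat W *\<^sub>v y)" unfolding Beq
      by (rule assoc_mult_mat_vec[of _ m l _ l]) (use Q' S W y in auto)
    also have "\<dots> = Q' *\<^sub>v (S *\<^sub>v z)" unfolding z_def[symmetric]
      by (rule assoc_mult_mat_vec[of _ m l _ l]) (use Q' S z in auto)
    finally show ?thesis .
  qed
  have BB: "(B *\<^sub>v y) \<bullet> (B *\<^sub>v y) = (S *\<^sub>v z) \<bullet> (S *\<^sub>v z)" unfolding By by (rule iso_cols[OF Q' Sz])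
  have Szj: "(S *\<^sub>v z) $ j = S $$ (j, j) * z $ j" if j: "j < l" for j
  proof -
    have "(S *\<^sub>v z) $ j = (\<Sum>k\<in>{0..<l}. S $$ (j, k) * z $ k)"
      using S z j by (simp add: mult_mat_vec_def scalar_prod_def)
    also have "\<dots> = (\<Sum>k\<in>{0..<l}. if k = j then S $$ (j, j) * z $ j else 0)"
      by (rule sum.cong[OF refl]) (use Sd S j in \<open>auto simp: diagonal_mat_def\<close>)
    also have "\<dots> = S $$ (j, j) * z $ j" using j by simp
    finally show ?thesis .
  qed
  let ?s = "S $$ (l - 1, l - 1)"
  have "?s^2 * (y \<bullet> y) = (\<Sum>j\<in>{0..<l}. ?s^2 * (z $ j)^2)"
    unfolding zz[symmetric] using z by (simp add: scalar_prod_def sum_distrib_left power2_eq_square)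
  also have "\<dots> \<le> (\<Sum>j\<in>{0..<l}. (S $$ (j, j) * z $ j)^2)"
  proof (rule sum_mono)
    fix j assume "j \<in> {0..<l}"
    then have j: "j < l" by simp
    have "0 \<le> ?s" using Snn l by simp
    moreover have "?s \<le> S $$ (j, j)" using Smon j by simp
    ultimately have "?s^2 \<le> (S $$ (j, j))^2" by (simp add: power_mono)
    then have "?s^2 * (z $ j)^2 \<le> (S $$ (j, j))^2 * (z $ j)^2" by (rule mult_right_mono) simp
    then show "?s^2 * (z $ j)^2 \<le> (S $$ (j, j) * z $ j)^2" by (simp add: power_mult_distrib)
  qed
  also have "\<dots> = (\<Sum>j\<in>{0..<l}. (S *\<^sub>v z) $ j * (S *\<^sub>v z) $ j)"
    by (rule sum.cong[OF refl]) (simp add: Szj power2_eq_square)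
  also have "\<dots> = (S *\<^sub>v z) \<bullet> (S *\<^sub>v z)"
  proof -
    have dimSz: "dim_vec (S *\<^sub>v z) = l" using S by simp
    show ?thesis unfolding scalar_prod_def dimSz ..
  qed
  finally show ?thesis using BB by simp
qed

theorem proposition3:
  fixes A :: "real mat" and m n k s p :: nat
    and \<Omega> :: "real mat" and Qs :: "nat \<Rightarrow> real mat" and \<alpha>s :: "nat \<Rightarrow> real"
  defines "l \<equiv> k + s"
  assumes A: "A \<in> carrier_mat m n"
    and k: "1 \<le> k"
    and Omega: "\<Omega> \<in> carrier_mat n l"
    and Q0: "orthonormal_cols (Qs 0) m l" "col_space (Qs 0) = col_space (A * \<Omega>)"
    and alpha0: "\<alpha>s 0 = 0"
    and steps: "\<And>j. j < p \<Longrightarrow> alg2_step A m l (Qs j) (\<alpha>s j) (Qs (Suc j)) (\<alpha>s (Suc j))"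
    and j: "j < p"
    and pos: "\<alpha>s j > 0"
    and i: "1 \<le> i" "i \<le> l"
  shows "sigma (transpose_mat (Qs j) * A) i
           \<le> sqrt (sigma (A * transpose_mat A * Qs j - \<alpha>s j \<cdot>\<^sub>m Qs j) i + \<alpha>s j)
       \<and> sqrt (sigma (A * transpose_mat A * Qs j - \<alpha>s j \<cdot>\<^sub>m Qs j) i + \<alpha>s j) \<le> sigma A i"
proof -
  have l1: "1 \<le> l" using k l_def by simp
  have inv: "orthonormal_cols (Qs j') m l \<and> 0 \<le> \<alpha>s j' \<and> 2 * \<alpha>s j' \<le> (sigma A l)^2" if "j' \<le> p" for j'
    using that
  proof (induction j')
    case 0 then show ?case using Q0(1) alpha0 by simp
  next
    case (Suc j')
    then have jp: "j' < p" by simp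
    have IH: "orthonormal_cols (Qs j') m l" "0 \<le> \<alpha>s j'" "2 * \<alpha>s j' \<le> (sigma A l)^2"
      using Suc jp by auto
    obtain S W where svd: "econ_svd (A * transpose_mat A * Qs j' - \<alpha>s j' \<cdot>\<^sub>m Qs j') (Qs (Suc j')) S W m l"
      and upd: "\<alpha>s (Suc j') = (if S $$ (l - 1, l - 1) > \<alpha>s j' then (S $$ (l - 1, l - 1) + \<alpha>s j') / 2 else \<alpha>s j')"
      using steps[OF jp] unfolding alg2_step_def by blast
    have Q: "Qs j' \<in> carrier_mat m l" "transpose_mat (Qs j') * Qs j' = 1\<^sub>m l"
      using IH(1) unfolding orthonormal_cols_def by auto
    let ?s = "S $$ (l - 1, l - 1)"
    let ?B = "A * transpose_mat A * Qs j' - \<alpha>s j' \<cdot>\<^sub>m Qs j'"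
    let ?g = "(sigma A l)^2 - \<alpha>s j'"
    have snn: "0 \<le> ?s" using svd l1 unfolding econ_svd_def by auto
    have gnn: "0 \<le> ?g" using IH(2,3) by linarith
    have inj1: "\<forall>y\<in>carrier_vec l. (1\<^sub>m l :: real mat) *\<^sub>v y = 0\<^sub>v l \<longrightarrow> y = 0\<^sub>v l"
    proof (intro ballI impI)
      fix y :: "real vec" assume yc: "y \<in> carrier_vec l" and "1\<^sub>m l *\<^sub>v y = 0\<^sub>v l"
      then show "y = 0\<^sub>v l" using one_mult_mat_vec[OF yc] by simp
    qed
    obtain y where y: "y \<in> carrier_vec l" "1\<^sub>m l *\<^sub>v y \<noteq> 0\<^sub>v l"
      and yb: "(?B *\<^sub>v (1\<^sub>m l *\<^sub>v y)) \<bullet> (?B *\<^sub>v (1\<^sub>m l *\<^sub>v y)) \<le> ?g^2 * ((1\<^sub>m l *\<^sub>v y) \<bullet> (1\<^sub>m l *\<^sub>v y))"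
      using UB_core[OF A Q l1 order.refl IH(3) one_carrier_mat inj1] by blast
    have y1: "1\<^sub>m l *\<^sub>v y = y" using y(1) by simp
    have y0: "y \<noteq> 0\<^sub>v l" using y(2) y1 by simp
    have "?s^2 * (y \<bullet> y) \<le> (?B *\<^sub>v y) \<bullet> (?B *\<^sub>v y)"
      by (rule svd_lower[OF svd _ y(1)]) (use l1 in simp)
    with yb y1 have "?s^2 * (y \<bullet> y) \<le> ?g^2 * (y \<bullet> y)" by simp
    moreover have "y \<bullet> y > 0" using sprod_self_pos[OF y(1) y0] .
    ultimately have "?s^2 \<le> ?g^2" by (meson mult_le_cancel_right_pos)
    then have sg: "?s \<le> ?g" using snn gnn by (meson power2_le_imp_le)
    have orth: "orthonormal_cols (Qs (Suc j')) m l" using svd unfolding econ_svd_def by auto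
    show ?case using orth upd sg IH(2,3) snn by (auto split: if_splits)
  qed
  from inv[of j] j have J: "orthonormal_cols (Qs j) m l" "0 \<le> \<alpha>s j" "2 * \<alpha>s j \<le> (sigma A l)^2" by auto
  have Q: "Qs j \<in> carrier_mat m l" "transpose_mat (Qs j) * Qs j = 1\<^sub>m l"
    using J(1) unfolding orthonormal_cols_def by auto
  let ?B = "A * transpose_mat A * Qs j - \<alpha>s j \<cdot>\<^sub>m Qs j"
  have lb: "(sigma (transpose_mat (Qs j) * A) i)^2 \<le> sigma ?B i + \<alpha>s j"
    by (rule LB[OF A Q i J(2)])
  have ub: "sigma ?B i \<le> (sigma A i)^2 - \<alpha>s j"
    by (rule UB[OF A Q i J(3) J(2)])
  show ?thesis
  proof
    show "sigma (transpose_mat (Qs j) * A) i \<le> sqrt (sigma ?B i + \<alpha>s j)"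
      using lb by (rule real_le_rsqrt)
    have "sigma ?B i + \<alpha>s j \<le> (sigma A i)^2" using ub by simp
    then have "sqrt (sigma ?B i + \<alpha>s j) \<le> sqrt ((sigma A i)^2)" by (rule real_sqrt_le_mono)
    also have "\<dots> = sigma A i" using sigma_nonneg[of A i] by simp
    finally show "sqrt (sigma ?B i + \<alpha>s j) \<le> sigma A i" .
  qed
qed

end
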